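(* Let $n\ge2$, $m\ge2$ be integers, let $\mathcal{V}=\mathcal{V}_1\otimes\dots\otimes\mathcal{V}_m$ be a tensor product of vector spaces over a field $\mathbb{F}$, let $\{x_a : a\in[n]\}$ be a multiset of product tensors with $x_a=x_{a,1}\otimes\dots\otimes x_{a,m}$, and for $S\subseteq[n]$, $j\in[m]$ let $d_j^S=\dim\operatorname{span}\{x_{a,j}:a\in S\}$. Let $q \in [n-1]$, $s \in [q]$, and $r$ be positive integers with $n+1 \leq r \leq n+\lceil (n-q)/s\rceil$, and let $l=\lfloor q/s\rfloor$. Suppose that for every subset $S \subseteq [n]$ with $s+1\leq |S| \leq n$, $$2|S|+\max\left\{0,(r-n)-\left\lceil\frac{n-q+s}{|S|}\right\rceil+1\right\} \leq \sum_{j=1}^m (d_j^S -1)+1.$$ Then for any multiset of product tensors $\{y_a : a \in [r]\}$ with $\sum_{a \in [n]} x_a= \sum_{a \in [r]} y_a$ such that the pair $(\sum_{a \in [n]} x_a,\sum_{a \in [r]} y_a)$ is irreducible, this pair of decompositions has an $(s, l)$-subpartition.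
   Context: $[n]=\{1,\dots,n\}$. A product tensor is a non-zero tensor $z_1\otimes\dots\otimes z_m$, $z_j\in\mathcal{V}_j$. For product tensors with $\sum_{a\in[n]}x_a=\sum_{a\in[r]}y_a$: the pair $(\sum_{a\in[n]}x_a,\sum_{a\in[r]}y_a)$ is reducible if there exist $Q\subseteq[n]$, $R\subseteq[r]$ with $|Q|>|R|$ and $\sum_{a\in Q}x_a=\sum_{a\in R}y_a$, and irreducible otherwise. The pair has an $(s,l)$-subpartition if there exist pairwise disjoint subsets $Q_1,\dots,Q_l\subseteq[n]$ and pairwise disjoint subsets $R_1,\dots,R_l\subseteq[r]$ with $\max\{1,|R_p|\}\le|Q_p|\le s$ and $\sum_{a\in Q_p}x_a=\sum_{a\in R_p}y_a$ for all $p\in[l]$. *)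

theory Defs
  imports Complex_Main "HOL-Library.Function_Algebras"
begin

text \<open>Every vector space over a field F is isomorphic to a subspace of
  F^I (functions I -> F) for some index set I; we represent vectors of each tensor
  factor V_j as functions of type 'i => 'a, with 'a a field.  A product tensor
  z_1 (x) ... (x) z_m (given by a component family z :: nat => 'i => 'a, factors
  indexed by j in {1..m}) is represented by its coordinate function
  (idx :: nat => 'i) |-> prod_{j=1..m} z j (idx j); this map from the algebraic
  tensor product into functions on I^m is injective, so equalities of sums of
  product tensors are faithfully captured.\<close>

definition fscale :: "'a::field \<Rightarrow> ('i \<Rightarrow> 'a) \<Rightarrow> ('i \<Rightarrow> 'a)" where
  "fscale c f = (\<lambda>i. c * f i)"

global_interpretation fvs: vector_space "fscale :: 'a::field \<Rightarrow> ('i \<Rightarrow> 'a) \<Rightarrow> ('i \<Rightarrow> 'a)"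
  by unfold_locales (auto simp: fscale_def algebra_simps fun_eq_iff)

definition vdim :: "('i \<Rightarrow> 'a::field) set \<Rightarrow> nat" where
  "vdim V = fvs.dim V"

definition ptensor :: "nat \<Rightarrow> (nat \<Rightarrow> 'i \<Rightarrow> 'a::field) \<Rightarrow> (nat \<Rightarrow> 'i) \<Rightarrow> 'a" where
  "ptensor m z = (\<lambda>idx. \<Prod>j\<in>{1..m}. z j (idx j))"

definition is_product_tensor :: "nat \<Rightarrow> (nat \<Rightarrow> 'i \<Rightarrow> 'a::field) \<Rightarrow> bool" where
  "is_product_tensor m z \<longleftrightarrow> (\<forall>j\<in>{1..m}. z j \<noteq> 0)"

definition tsum :: "nat \<Rightarrow> (nat \<Rightarrow> nat \<Rightarrow> 'i \<Rightarrow> 'a::field) \<Rightarrow> nat set \<Rightarrow> (nat \<Rightarrow> 'i) \<Rightarrow> 'a" where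
  "tsum m x A = (\<lambda>idx. \<Sum>a\<in>A. ptensor m (x a) idx)"

definition reducible :: "nat \<Rightarrow> nat \<Rightarrow> nat \<Rightarrow> (nat \<Rightarrow> nat \<Rightarrow> 'i \<Rightarrow> 'a::field)
    \<Rightarrow> (nat \<Rightarrow> nat \<Rightarrow> 'i \<Rightarrow> 'a) \<Rightarrow> bool" where
  "reducible m n r x y \<longleftrightarrow>
     (\<exists>Q R. Q \<subseteq> {1..n} \<and> R \<subseteq> {1..r} \<and> card Q > card R \<and> tsum m x Q = tsum m y R)"

definition irreducible_pair :: "nat \<Rightarrow> nat \<Rightarrow> nat \<Rightarrow> (nat \<Rightarrow> nat \<Rightarrow> 'i \<Rightarrow> 'a::field)
    \<Rightarrow> (nat \<Rightarrow> nat \<Rightarrow> 'i \<Rightarrow> 'a) \<Rightarrow> bool" where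
  "irreducible_pair m n r x y \<longleftrightarrow> \<not> reducible m n r x y"

definition has_subpartition :: "nat \<Rightarrow> nat \<Rightarrow> nat \<Rightarrow> (nat \<Rightarrow> nat \<Rightarrow> 'i \<Rightarrow> 'a::field)
    \<Rightarrow> (nat \<Rightarrow> nat \<Rightarrow> 'i \<Rightarrow> 'a) \<Rightarrow> nat \<Rightarrow> nat \<Rightarrow> bool" where
  "has_subpartition m n r x y s l \<longleftrightarrow>
     (\<exists>Q R :: nat \<Rightarrow> nat set.
        (\<forall>p\<in>{1..l}. Q p \<subseteq> {1..n} \<and> R p \<subseteq> {1..r}) \<and>
        (\<forall>p\<in>{1..l}. \<forall>p'\<in>{1..l}. p \<noteq> p' \<longrightarrow> Q p \<inter> Q p' = {} \<and> R p \<inter> R p' = {}) \<and>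
        (\<forall>p\<in>{1..l}. max 1 (card (R p)) \<le> card (Q p) \<and> card (Q p) \<le> s \<and>
                     tsum m x (Q p) = tsum m y (R p)))"

end

theory Submission
  imports Defs
begin

lemma fscale_apply: "fscale c f x = c * f x" by (simp add: fscale_def)

lemma sum_fun_apply[simp]: "(\<Sum>i\<in>A. f i) x = (\<Sum>i\<in>A. f i x)"
  by (induction A rule: infinite_finite_induct) auto

lemma module_fscale: "module (fscale :: 'a::field \<Rightarrow> ('i \<Rightarrow> 'a) \<Rightarrow> _)"
  using fvs.module_axioms .

lemma mhI:
  fixes f :: "('i \<Rightarrow> 'a::field) \<Rightarrow> ('j \<Rightarrow> 'a)"
  assumes "\<And>x y. f (x + y) = f x + f y" "\<And>c x. f (fscale c x) = fscale c (f x)"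
  shows "module_hom fscale fscale f"
  using assms by (simp add: module_hom_iff module_fscale)

lemma span_subset_span:
  "A \<subseteq> fvs.span B \<Longrightarrow> fvs.span A \<subseteq> fvs.span B"
  by (simp add: fvs.span_minimal)

lemma dim_mono_fin:
  assumes "finite B" "A \<subseteq> fvs.span B"
  shows "fvs.dim A \<le> fvs.dim B"
proof -
  obtain C where C: "C \<subseteq> B" "fvs.independent C" "B \<subseteq> fvs.span C" "card C = fvs.dim B"
    by (rule fvs.basis_exists)
  have "A \<subseteq> fvs.span C" using assms(2) span_subset_span[OF C(3)] by blast
  moreover have "finite C" using C(1) assms(1) finite_subset by blast
  ultimately show ?thesis using fvs.dim_le_card C(4) by metis
qed

lemma dim_subset_fin: "finite B \<Longrightarrow> A \<subseteq> B \<Longrightarrow> fvs.dim A \<le> fvs.dim B"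
  using dim_mono_fin fvs.span_superset by blast

lemma fin_basis:
  assumes "finite B"
  obtains C where "C \<subseteq> B" "fvs.independent C" "fvs.span C = fvs.span B" "card C = fvs.dim B" "finite C"
proof -
  obtain C where C: "C \<subseteq> B" "fvs.independent C" "B \<subseteq> fvs.span C" "card C = fvs.dim B"
    by (rule fvs.basis_exists)
  have "fvs.span C = fvs.span B"
    using C(1,3) fvs.span_mono span_subset_span by blast
  then show ?thesis using that C assms finite_subset by blast
qed

lemma dim_Un_le:
  assumes "finite A" "finite B"
  shows "fvs.dim (A \<union> B) \<le> fvs.dim A + fvs.dim B"
proof -
  obtain CA where CA: "CA \<subseteq> A" "fvs.span CA = fvs.span A" "card CA = fvs.dim A" "finite CA"
    using fin_basis[OF assms(1)] by metis
  obtain CB where CB: "CB \<subseteq> B" "fvs.span CB = fvs.span B" "card CB = fvs.dim B" "finite CB"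
    using fin_basis[OF assms(2)] by metis
  have "A \<union> B \<subseteq> fvs.span (CA \<union> CB)"
    using CA(2) CB(2) fvs.span_superset fvs.span_mono[of CA "CA \<union> CB"] fvs.span_mono[of CB "CA \<union> CB"]
    by blast
  then have "fvs.dim (A \<union> B) \<le> card (CA \<union> CB)" using fvs.dim_le_card CA(4) CB(4) by blast
  also have "\<dots> \<le> card CA + card CB" by (rule card_Un_le)
  finally show ?thesis using CA CB by simp
qed

lemma dim_add_imp_inter:
  assumes "finite A" "finite B" "fvs.dim (A \<union> B) = fvs.dim A + fvs.dim B"
  shows "fvs.span A \<inter> fvs.span B = {0}"
proof (rule ccontr)
  assume "fvs.span A \<inter> fvs.span B \<noteq> {0}"
  moreover have "0 \<in> fvs.span A \<inter> fvs.span B" using fvs.span_zero by blast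
  ultimately obtain v where v: "v \<in> fvs.span A" "v \<in> fvs.span B" "v \<noteq> 0"
    by blast
  obtain CB where CB: "CB \<subseteq> B" "fvs.span CB = fvs.span B" "card CB = fvs.dim B" "finite CB"
    using fin_basis[OF assms(2)] by metis
  have iv: "fvs.independent {v}" using v(3) by simp
  obtain C where C: "{v} \<subseteq> C" "C \<subseteq> fvs.span A" "fvs.independent C" "fvs.span A \<subseteq> fvs.span C"
    using fvs.maximal_independent_subset_extend[of "{v}" "fvs.span A"] iv v(1) by blast
  have fC: "finite C" using fvs.independent_span_bound[OF assms(1) C(3)] C(2) by blast
  have cC: "card C = fvs.dim A"
    using fvs.basis_card_eq_dim[OF C(2) C(4) C(3)] by simp
  let ?D = "(C - {v}) \<union> CB"
  have CBD: "fvs.span CB \<subseteq> fvs.span ?D" by (rule fvs.span_mono) (rule Un_upper2)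
  have sub: "C \<subseteq> fvs.span ?D"
  proof
    fix c assume cC: "c \<in> C"
    show "c \<in> fvs.span ?D"
    proof (cases "c = v")
      case True
      then have "c \<in> fvs.span CB" using v(2) CB(2) by simp
      then show ?thesis using CBD by (rule subsetD[rotated])
    next
      case False
      then have "c \<in> ?D" using cC by simp
      then show ?thesis by (rule fvs.span_base)
    qed
  qed
  have AD: "A \<subseteq> fvs.span ?D"
    using C(4) fvs.span_superset[of A] span_subset_span[OF sub] by (meson order_trans)
  have BD: "B \<subseteq> fvs.span ?D"
    using CB(2) fvs.span_superset[of B] CBD by (metis order_trans)
  have "A \<union> B \<subseteq> fvs.span ?D" using AD BD by (rule Un_least)
  moreover have "finite ((C - {v}) \<union> CB)" using fC CB(4) by simp
  ultimately have "fvs.dim (A \<union> B) \<le> card ((C - {v}) \<union> CB)"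
    using fvs.dim_le_card by blast
  also have "\<dots> \<le> card (C - {v}) + card CB" by (rule card_Un_le)
  also have "\<dots> = card C - 1 + card CB" using C(1) fC by simp
  finally have "fvs.dim (A \<union> B) \<le> card C - 1 + card CB" .
  moreover have "card C \<ge> 1" using C(1) fC by (metis One_nat_def Suc_leI card_gt_0_iff empty_iff insert_subset)
  ultimately show False using assms(3) cC CB(3) by linarith
qed

lemma dim_insert_notin:
  assumes "finite S" "x \<notin> fvs.span S"
  shows "fvs.dim (insert x S) = fvs.dim S + 1"
proof -
  obtain C where C: "C \<subseteq> S" "fvs.independent C" "fvs.span C = fvs.span S" "card C = fvs.dim S" "finite C"
    using fin_basis[OF assms(1)] by metis
  have xC: "x \<notin> fvs.span C" using C(3) assms(2) by simp
  have ind: "fvs.independent (insert x C)" using fvs.independent_insertI[OF xC C(2)] .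
  have S1: "S \<subseteq> fvs.span C" using C(3) fvs.span_superset[of S] by simp
  have S2: "fvs.span C \<subseteq> fvs.span (insert x C)" by (rule fvs.span_mono) (rule subset_insertI)
  have S3: "x \<in> fvs.span (insert x C)" by (rule fvs.span_base) simp
  have sub: "insert x S \<subseteq> fvs.span (insert x C)" using S1 S2 S3 by blast
  have sub2: "insert x C \<subseteq> insert x S" using C(1) by blast
  have "card (insert x C) = fvs.dim (insert x S)"
    by (rule fvs.basis_card_eq_dim[OF sub2 sub ind])
  moreover have "x \<notin> C" using xC fvs.span_base by metis
  ultimately show ?thesis using C(4,5) by simp
qed

lemma dim_insert_in:
  assumes "x \<in> fvs.span S"
  shows "fvs.dim (insert x S) = fvs.dim S"
  using fvs.span_redundant[OF assms] by (rule fvs.span_eq_dim)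

lemma indep_disjoint_inter:
  assumes "fvs.independent C" "finite C" "Y \<union> Z = C" "Y \<inter> Z = {}"
  shows "fvs.span Y \<inter> fvs.span Z = {0}"
proof -
  have YC: "Y \<subseteq> C" and ZC: "Z \<subseteq> C" using assms(3) by auto
  have iY: "fvs.independent Y" using fvs.independent_mono[OF assms(1) YC] .
  have iZ: "fvs.independent Z" using fvs.independent_mono[OF assms(1) ZC] .
  have fY: "finite Y" "finite Z" using assms(2) YC ZC finite_subset by auto
  have "fvs.dim (Y \<union> Z) = card (Y \<union> Z)" using fvs.dim_eq_card_independent[of "Y \<union> Z"] assms(1,3) by simp
  also have "\<dots> = card Y + card Z" using card_Un_disjoint[OF fY assms(4)] .
  also have "\<dots> = fvs.dim Y + fvs.dim Z" using fvs.dim_eq_card_independent[OF iY] fvs.dim_eq_card_independent[OF iZ] by simp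
  finally show ?thesis using dim_add_imp_inter fY by blast
qed

lemma dim_zero_set: "fvs.dim {0::'i \<Rightarrow> 'a::field} = 0"
proof -
  have "fvs.span {0::'i \<Rightarrow> 'a} = fvs.span {}" by simp
  then have "fvs.dim {0::'i \<Rightarrow> 'a} = fvs.dim ({}::('i \<Rightarrow> 'a) set)" by (rule fvs.span_eq_dim)
  then show ?thesis using fvs.dim_eq_card_independent[OF fvs.independent_empty] by simp
qed

lemma rank_nullity:
  fixes f :: "('i \<Rightarrow> 'a::field) \<Rightarrow> ('j \<Rightarrow> 'a)"
  assumes f: "module_hom fscale fscale f" and B: "finite B"
  shows "fvs.dim (fvs.span B) = fvs.dim (f ` fvs.span B) + fvs.dim (fvs.span B \<inter> {v. f v = 0})"
proof -
  interpret mh: module_hom fscale fscale f by (rule f)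
  define Kr where "Kr = fvs.span B \<inter> {v. f v = 0}"
  obtain Z where Z: "Z \<subseteq> Kr" "fvs.independent Z" "Kr \<subseteq> fvs.span Z"
    by (rule fvs.maximal_independent_subset)
  have ZB: "Z \<subseteq> fvs.span B" using Z(1) unfolding Kr_def by (rule subset_trans) (rule Int_lower1)
  obtain C where C: "Z \<subseteq> C" "C \<subseteq> fvs.span B" "fvs.independent C" "fvs.span B \<subseteq> fvs.span C"
    by (rule fvs.maximal_independent_subset_extend[OF ZB Z(2)])
  have fC: "finite C" using fvs.independent_span_bound[OF B C(3) C(2)] by (rule conjunct1)
  have fZ: "finite Z" using C(1) fC by (rule finite_subset)
  define Y where "Y = C - Z"
  have cC: "card C = fvs.dim (fvs.span B)" using fvs.basis_card_eq_dim[OF C(2) C(4) C(3)] .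
  have cZ: "card Z = fvs.dim Kr" using fvs.basis_card_eq_dim[OF Z(1) Z(3) Z(2)] .
  have YZ1: "Y \<union> Z = C" using C(1) unfolding Y_def by (rule Un_Diff_cancel2[THEN trans, OF Un_absorb2])
  have YZ2: "Y \<inter> Z = {}" unfolding Y_def by (rule Diff_disjoint[THEN trans[rotated], OF Int_commute])
  have YZ: "fvs.span Y \<inter> fvs.span Z = {0}"
    by (rule indep_disjoint_inter[OF C(3) fC YZ1 YZ2])
  have spC: "fvs.span C = fvs.span B" using C(2) C(4) span_subset_span by blast
  have YC: "Y \<subseteq> C" unfolding Y_def by (rule Diff_subset)
  have inj: "inj_on f (fvs.span Y)"
  proof -
    have "\<forall>x\<in>fvs.span Y. f x = 0 \<longrightarrow> x = 0"
    proof (intro ballI impI)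
      fix x assume x: "x \<in> fvs.span Y" "f x = 0"
      have "x \<in> fvs.span C" using x(1) fvs.span_mono[OF YC] by (rule subsetD[rotated])
      then have "x \<in> Kr" using spC x(2) unfolding Kr_def by simp
      then have "x \<in> fvs.span Z" using Z(3) by (rule subsetD[rotated])
      then show "x = 0" using YZ x(1) by blast
    qed
    then show ?thesis using mh.inj_on_iff_eq_0[of "fvs.span Y"] by simp
  qed
  have iY: "fvs.independent Y" using fvs.independent_mono[OF C(3) YC] .
  have ifY: "fvs.independent (f ` Y)" using mh.independent_injective_image[OF iY inj] .
  have cfY: "card (f ` Y) = card Y"
    using card_image inj_on_subset[OF inj fvs.span_superset] by blast
  have "f ` fvs.span B = fvs.span (f ` C)" using mh.span_image spC by simp
  also have "\<dots> = fvs.span (f ` Y)"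
  proof -
    have "f ` C \<subseteq> fvs.span (f ` Y)"
    proof
      fix z assume "z \<in> f ` C"
      then obtain c where c: "c \<in> C" "z = f c" by blast
      show "z \<in> fvs.span (f ` Y)"
      proof (cases "c \<in> Z")
        case True
        then have "c \<in> Kr" using Z(1) by blast
        then have "f c = 0" unfolding Kr_def by simp
        then show ?thesis using c fvs.span_zero by simp
      next
        case False
        then have "c \<in> Y" using c(1) unfolding Y_def by simp
        then have "z \<in> f ` Y" using c(2) by simp
        then show ?thesis by (rule fvs.span_base)
      qed
    qed
    moreover have "f ` Y \<subseteq> fvs.span (f ` C)"
      using image_mono[OF YC] fvs.span_superset[of "f ` C"] by (rule subset_trans)
    ultimately show ?thesis unfolding fvs.span_eq by (rule conjI)
  qed
  finally have "fvs.dim (f ` fvs.span B) = fvs.dim (f ` Y)" using fvs.dim_span by metis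
  also have "\<dots> = card Y" using fvs.dim_eq_card_independent[OF ifY] cfY by simp
  finally have 1: "fvs.dim (f ` fvs.span B) = card Y" .
  have "card C = card Y + card Z" using card_Un_disjoint[of Y Z] YZ1 YZ2 fC YC fZ finite_subset by metis
  then show ?thesis using 1 cC cZ Kr_def by simp
qed

lemma dim_image_le:
  fixes f :: "('i \<Rightarrow> 'a::field) \<Rightarrow> ('j \<Rightarrow> 'a)"
  assumes f: "module_hom fscale fscale f" and B: "finite B"
  shows "fvs.dim (f ` B) \<le> fvs.dim B"
proof -
  have "fvs.dim (f ` B) = fvs.dim (f ` fvs.span B)"
    using module_hom.span_image[OF f] fvs.dim_span by metis
  then show ?thesis using rank_nullity[OF f B] by simp
qed

lemma dim_inj_image:
  fixes f :: "('i \<Rightarrow> 'a::field) \<Rightarrow> ('j \<Rightarrow> 'a)"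
  assumes f: "module_hom fscale fscale f" and B: "finite B" and inj: "inj_on f (fvs.span B)"
  shows "fvs.dim (f ` B) = fvs.dim B"
proof -
  have "fvs.dim (f ` B) = fvs.dim (f ` fvs.span B)"
    using module_hom.span_image[OF f] fvs.dim_span by metis
  moreover have "fvs.span B \<inter> {v. f v = 0} = {0}"
    using inj module_hom.inj_on_iff_eq_0[OF f] fvs.span_zero module_hom.zero[OF f] by auto
  ultimately show ?thesis using rank_nullity[OF f B] dim_zero_set by simp
qed

lemma span_UN_decomp:
  assumes "finite PP" "x \<in> fvs.span (\<Union>P\<in>PP. S P)"
  shows "\<exists>g. (\<forall>P\<in>PP. g P \<in> fvs.span (S P)) \<and> x = (\<Sum>P\<in>PP. g P)"
  using assms
proof (induction PP arbitrary: x rule: finite_induct)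
  case empty
  then show ?case by simp
next
  case (insert P0 PP)
  have "x \<in> fvs.span (S P0 \<union> (\<Union>P\<in>PP. S P))" using insert.prems by simp
  then obtain a b where ab: "x = a + b" "a \<in> fvs.span (S P0)" "b \<in> fvs.span (\<Union>P\<in>PP. S P)"
    unfolding fvs.span_Un by blast
  obtain g where g: "\<forall>P\<in>PP. g P \<in> fvs.span (S P)" "b = (\<Sum>P\<in>PP. g P)"
    using insert.IH[OF ab(3)] by blast
  define g' where "g' = g(P0 := a)"
  have "(\<Sum>P\<in>PP. g' P) = (\<Sum>P\<in>PP. g P)"
    using insert.hyps(2) g'_def by (intro sum.cong) auto
  then have "x = (\<Sum>P\<in>insert P0 PP. g' P)"
    using insert.hyps ab g g'_def by simp
  moreover have "\<forall>P\<in>insert P0 PP. g' P \<in> fvs.span (S P)" using g ab g'_def by auto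
  ultimately show ?case by blast
qed

lemma dim_UN_le:
  assumes "finite PP" "\<And>P. P \<in> PP \<Longrightarrow> finite (S P)"
  shows "fvs.dim (\<Union>P\<in>PP. S P) \<le> (\<Sum>P\<in>PP. fvs.dim (S P))"
  using assms
proof (induction PP rule: finite_induct)
  case empty
  then show ?case using fvs.dim_eq_card_independent[OF fvs.independent_empty] by simp
next
  case (insert P0 PP)
  have "fvs.dim (\<Union>P\<in>insert P0 PP. S P) = fvs.dim (S P0 \<union> (\<Union>P\<in>PP. S P))" by simp
  also have "\<dots> \<le> fvs.dim (S P0) + fvs.dim (\<Union>P\<in>PP. S P)"
    using insert by (intro dim_Un_le) auto
  also have "\<dots> \<le> fvs.dim (S P0) + (\<Sum>P\<in>PP. fvs.dim (S P))" using insert by simp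
  finally show ?case using insert by simp
qed

lemma dim_UN_sub_eq:
  assumes "finite PP" "\<And>P. P \<in> PP \<Longrightarrow> finite (S P)"
    and eq: "fvs.dim (\<Union>P\<in>PP. S P) = (\<Sum>P\<in>PP. fvs.dim (S P))" and I: "I \<subseteq> PP"
  shows "fvs.dim (\<Union>P\<in>I. S P) = (\<Sum>P\<in>I. fvs.dim (S P))"
proof -
  have fI: "finite I" "finite (PP - I)" using assms finite_subset by auto
  have U: "(\<Union>P\<in>PP. S P) = (\<Union>P\<in>I. S P) \<union> (\<Union>P\<in>PP - I. S P)" using I by blast
  have f1: "finite (\<Union>P\<in>I. S P)" using fI(1) I assms(2) by blast
  have f2: "finite (\<Union>P\<in>PP - I. S P)" using fI(2) assms(2) by blast
  have "fvs.dim (\<Union>P\<in>PP. S P) \<le> fvs.dim (\<Union>P\<in>I. S P) + fvs.dim (\<Union>P\<in>PP - I. S P)"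
    unfolding U by (rule dim_Un_le[OF f1 f2])
  also have "\<dots> \<le> fvs.dim (\<Union>P\<in>I. S P) + (\<Sum>P\<in>PP - I. fvs.dim (S P))"
    using dim_UN_le[OF fI(2)] assms by auto
  finally have 1: "(\<Sum>P\<in>PP. fvs.dim (S P)) \<le> fvs.dim (\<Union>P\<in>I. S P) + (\<Sum>P\<in>PP - I. fvs.dim (S P))"
    using eq by simp
  have 2: "(\<Sum>P\<in>PP. fvs.dim (S P)) = (\<Sum>P\<in>I. fvs.dim (S P)) + (\<Sum>P\<in>PP - I. fvs.dim (S P))"
    using sum.subset_diff[OF I assms(1)] by (simp add: add.commute)
  have 3: "fvs.dim (\<Union>P\<in>I. S P) \<le> (\<Sum>P\<in>I. fvs.dim (S P))"
    using dim_UN_le[OF fI(1)] assms I by auto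
  show ?thesis using 1 2 3 by linarith
qed


lemma hom_in_span:
  assumes f: "module_hom fscale fscale f" and x: "x \<in> fvs.span B" and B: "f ` B \<subseteq> fvs.span C"
  shows "f x \<in> fvs.span C"
proof -
  have "f x \<in> f ` fvs.span B" using x by (rule imageI)
  also have "\<dots> = fvs.span (f ` B)" using module_hom.span_image[OF f] by simp
  also have "\<dots> \<subseteq> fvs.span C" using B by (rule span_subset_span)
  finally show ?thesis .
qed

lemma basis_of_sub:
  assumes "finite B" "C \<subseteq> fvs.span B"
  obtains BC where "BC \<subseteq> C" "fvs.independent BC" "C \<subseteq> fvs.span BC" "finite BC" "card BC = fvs.dim C"
proof -
  obtain BC where BC: "BC \<subseteq> C" "fvs.independent BC" "C \<subseteq> fvs.span BC"
    by (rule fvs.maximal_independent_subset)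
  have "BC \<subseteq> fvs.span B" using BC(1) assms(2) by (rule subset_trans)
  then have f: "finite BC" using fvs.independent_span_bound[OF assms(1) BC(2)] by blast
  have "card BC = fvs.dim C" by (rule fvs.basis_card_eq_dim[OF BC(1) BC(3) BC(2)])
  then show ?thesis using that BC f by blast
qed

lemma dim_mono_sub:
  assumes "finite B" "C \<subseteq> fvs.span B" "A \<subseteq> C"
  shows "fvs.dim A \<le> fvs.dim C"
proof -
  obtain BC where BC: "BC \<subseteq> C" "fvs.independent BC" "C \<subseteq> fvs.span BC" "finite BC" "card BC = fvs.dim C"
    by (rule basis_of_sub[OF assms(1,2)])
  have "A \<subseteq> fvs.span BC" using assms(3) BC(3) by (rule subset_trans)
  then have "fvs.dim A \<le> card BC" using BC(4) by (rule fvs.dim_le_card)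
  then show ?thesis using BC(5) by simp
qed

definition delta :: "'c \<Rightarrow> 'c \<Rightarrow> 'a::field" where
  "delta c = (\<lambda>c'. if c' = c then 1 else 0)"

lemma fun_in_span_delta:
  fixes f :: "'c \<Rightarrow> 'a::field"
  assumes "finite E" "\<And>c. c \<notin> E \<Longrightarrow> f c = 0"
  shows "f \<in> fvs.span (delta ` E)"
proof -
  have "f = (\<Sum>e\<in>E. fscale (f e) (delta e))"
  proof
    fix c
    show "f c = (\<Sum>e\<in>E. fscale (f e) (delta e)) c"
    proof (cases "c \<in> E")
      case True
      have "(\<Sum>e\<in>E. fscale (f e) (delta e)) c = (\<Sum>e\<in>E. f e * delta e c)"
        by (simp add: fscale_def)
      also have "\<dots> = f c" using True assms(1) by (simp add: delta_def if_distrib cong: if_cong)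
      finally show ?thesis by simp
    next
      case False
      have "(\<Sum>e\<in>E. fscale (f e) (delta e)) c = (\<Sum>e\<in>E. f e * delta e c)"
        by (simp add: fscale_def)
      also have "\<dots> = 0" using False by (intro sum.neutral) (auto simp: delta_def)
      finally show ?thesis using assms(2)[OF False] by simp
    qed
  qed
  also have "\<dots> \<in> fvs.span (delta ` E)"
    by (intro fvs.span_sum fvs.span_scale fvs.span_base) auto
  finally show ?thesis .
qed

lemma delta_inj: "inj (delta :: 'c \<Rightarrow> 'c \<Rightarrow> 'a::field)"
proof (rule injI)
  fix a b :: 'c
  assume "(delta a :: 'c \<Rightarrow> 'a) = delta b"
  then have "(delta a a :: 'a) = delta b a" by simp
  then show "a = b" by (simp add: delta_def split: if_splits)
qed

lemma delta_indep: "fvs.independent (delta ` (E::'c set) :: ('c \<Rightarrow> 'a::field) set)"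
  unfolding fvs.independent_explicit_finite_subsets
proof (intro allI impI ballI)
  fix T :: "('c \<Rightarrow> 'a) set" and u v
  assume T: "T \<subseteq> delta ` E" "finite T" "(\<Sum>v\<in>T. fscale (u v) v) = 0" and v: "v \<in> T"
  obtain c where c: "v = delta c" using T(1) v by blast
  have "(\<Sum>w\<in>T. fscale (u w) w) c = (\<Sum>w\<in>T. u w * w c)" by (simp add: fscale_def)
  also have "\<dots> = (\<Sum>w\<in>T. if w = v then u w else 0)"
  proof (rule sum.cong[OF refl])
    fix w assume "w \<in> T"
    then obtain c' where c': "w = delta c'" using T(1) by blast
    show "u w * w c = (if w = v then u w else 0)"
    proof (cases "c' = c")
      case True
      then show ?thesis using c c' by (simp add: delta_def)
    next
      case False
      then have "w \<noteq> v" using c c' injD[OF delta_inj] by metis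
      moreover have "w c = 0" using c' False by (simp add: delta_def)
      ultimately show ?thesis by simp
    qed
  qed
  also have "\<dots> = u v" using T(2) v by simp
  finally show "u v = 0" using T(3) by simp
qed

lemma col_le_row:
  fixes G :: "'r \<Rightarrow> 'c \<Rightarrow> 'a::field"
  assumes W: "finite W" "range G \<subseteq> fvs.span W"
    and Cs: "finite Cs" "inj_on (\<lambda>c r. G r c) Cs" "fvs.independent ((\<lambda>c r. G r c) ` Cs)"
  shows "card Cs \<le> fvs.dim (range G)"
proof (rule ccontr)
  assume "\<not> card Cs \<le> fvs.dim (range G)"
  then have lt: "fvs.dim (range G) < card Cs" by simp
  define col where "col = (\<lambda>c r. G r c)"
  define restr :: "('c \<Rightarrow> 'a) \<Rightarrow> ('c \<Rightarrow> 'a)" where "restr = (\<lambda>R c. if c \<in> Cs then R c else 0)"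
  have mr: "module_hom fscale fscale restr"
    by (rule mhI) (auto simp: restr_def fscale_def fun_eq_iff)
  obtain Bg where Bg: "Bg \<subseteq> range G" "fvs.independent Bg" "range G \<subseteq> fvs.span Bg"
    by (rule fvs.maximal_independent_subset)
  have fBg: "finite Bg" using fvs.independent_span_bound[OF W(1) Bg(2)] Bg(1) W(2) by blast
  have dBg: "fvs.dim (range G) = card Bg" using fvs.basis_card_eq_dim[OF Bg(1) Bg(3) Bg(2)] by simp
  have "fvs.dim (restr ` Bg) \<le> fvs.dim Bg" by (rule dim_image_le[OF mr fBg])
  also have "\<dots> = card Bg" by (rule fvs.dim_eq_card_independent[OF Bg(2)])
  finally have tlt: "fvs.dim (restr ` Bg) < card Cs" using dBg lt by simp
  obtain Es where Es: "Es \<subseteq> restr ` Bg" "fvs.independent Es" "fvs.span Es = fvs.span (restr ` Bg)"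
     "card Es = fvs.dim (restr ` Bg)" "finite Es"
    using fin_basis[of "restr ` Bg"] fBg by blast
  define L :: "('c \<Rightarrow> 'a) \<Rightarrow> (('c \<Rightarrow> 'a) \<Rightarrow> 'a)" where
    "L = (\<lambda>\<beta> e. if e \<in> Es then (\<Sum>c\<in>Cs. \<beta> c * e c) else 0)"
  have mL: "module_hom fscale fscale L"
    by (rule mhI) (auto simp: L_def fscale_def fun_eq_iff sum.distrib sum_distrib_left algebra_simps)
  define D where "D = (delta ` Cs :: ('c \<Rightarrow> 'a) set)"
  have fD: "finite D" using Cs(1) D_def by simp
  have dD: "fvs.dim (fvs.span D) = card Cs"
    using fvs.dim_eq_card_independent[OF delta_indep[of Cs]] card_image[OF inj_on_subset[OF delta_inj]] D_def
    by (metis fvs.dim_span subset_UNIV)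
  have "L ` fvs.span D \<subseteq> fvs.span (delta ` Es)"
  proof
    fix z assume "z \<in> L ` fvs.span D"
    then obtain \<beta> where "z = L \<beta>" by blast
    then show "z \<in> fvs.span (delta ` Es)"
      by (intro fun_in_span_delta[OF Es(5)]) (simp add: L_def)
  qed
  moreover have "finite (delta ` Es :: (('c \<Rightarrow> 'a) \<Rightarrow> 'a) set)" using Es(5) by simp
  ultimately have "fvs.dim (L ` fvs.span D) \<le> card (delta ` Es :: (('c \<Rightarrow> 'a) \<Rightarrow> 'a) set)"
    by (rule fvs.dim_le_card)
  also have "\<dots> \<le> card Es" by (rule card_image_le[OF Es(5)])
  finally have "fvs.dim (L ` fvs.span D) < card Cs" using Es(4) tlt by simp
  then have "fvs.dim (fvs.span D \<inter> {v. L v = 0}) > 0" using rank_nullity[OF mL fD] dD by simp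
  then obtain \<beta> where \<beta>: "\<beta> \<in> fvs.span D" "L \<beta> = 0" "\<beta> \<noteq> 0"
  proof -
    assume h: "\<And>\<beta>. \<beta> \<in> fvs.span D \<Longrightarrow> L \<beta> = 0 \<Longrightarrow> \<beta> \<noteq> 0 \<Longrightarrow> thesis"
    show thesis
    proof (rule ccontr)
      assume "\<not> thesis"
      then have "fvs.span D \<inter> {v. L v = 0} \<subseteq> {0}" using h by blast
      moreover have fz: "finite {0::'c \<Rightarrow> 'a}" by simp
      ultimately have "fvs.dim (fvs.span D \<inter> {v. L v = 0}) \<le> fvs.dim {0::'c \<Rightarrow> 'a}"
        using dim_subset_fin by blast
      then show False using \<open>fvs.dim (fvs.span D \<inter> {v. L v = 0}) > 0\<close> by (simp add: dim_zero_set)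
    qed
  qed
  have \<beta>out: "\<forall>c. c \<notin> Cs \<longrightarrow> \<beta> c = 0"
  proof -
    have "fvs.subspace {f :: 'c \<Rightarrow> 'a. \<forall>c. c \<notin> Cs \<longrightarrow> f c = 0}"
      by (auto simp: fvs.subspace_def fscale_def)
    moreover have "D \<subseteq> {f :: 'c \<Rightarrow> 'a. \<forall>c. c \<notin> Cs \<longrightarrow> f c = 0}"
      by (auto simp: D_def delta_def)
    ultimately have "fvs.span D \<subseteq> {f :: 'c \<Rightarrow> 'a. \<forall>c. c \<notin> Cs \<longrightarrow> f c = 0}"
      by (intro fvs.span_minimal)
    then show ?thesis using \<beta>(1) by blast
  qed
  define \<psi> :: "('c \<Rightarrow> 'a) \<Rightarrow> (unit \<Rightarrow> 'a)" where "\<psi> = (\<lambda>R _. \<Sum>c\<in>Cs. \<beta> c * R c)"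
  have m\<psi>: "module_hom fscale fscale \<psi>"
    by (rule mhI) (auto simp: \<psi>_def fscale_def fun_eq_iff sum.distrib sum_distrib_left algebra_simps)
  have \<psi>Es: "\<And>e. e \<in> Es \<Longrightarrow> \<psi> e = 0"
  proof -
    fix e assume "e \<in> Es"
    then have "L \<beta> e = (\<Sum>c\<in>Cs. \<beta> c * e c)" by (simp add: L_def)
    then show "\<psi> e = 0" using \<beta>(2) by (simp add: \<psi>_def fun_eq_iff)
  qed
  have rows: "\<And>r. (\<Sum>c\<in>Cs. \<beta> c * G r c) = 0"
  proof -
    fix r
    have "G r \<in> fvs.span Bg" using Bg(3) by blast
    then have "restr (G r) \<in> restr ` fvs.span Bg" by blast
    also have "\<dots> = fvs.span (restr ` Bg)" using module_hom.span_image[OF mr] by simp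
    also have "\<dots> = fvs.span Es" using Es(3) by simp
    finally have "\<psi> (restr (G r)) = 0"
      using module_hom.eq_0_on_span[OF m\<psi>] \<psi>Es by blast
    then show "(\<Sum>c\<in>Cs. \<beta> c * G r c) = 0"
      by (simp add: \<psi>_def restr_def fun_eq_iff)
  qed
  have sum0: "(\<Sum>v\<in>col ` Cs. fscale (\<beta> (the_inv_into Cs col v)) v) = 0"
  proof -
    have "(\<Sum>v\<in>col ` Cs. fscale (\<beta> (the_inv_into Cs col v)) v) = (\<Sum>c\<in>Cs. fscale (\<beta> c) (col c))"
      unfolding sum.reindex[OF Cs(2)[folded col_def]] comp_def
      using the_inv_into_f_f[OF Cs(2)[folded col_def]] by (intro sum.cong) auto
    also have "\<dots> = 0" using rows by (simp add: fun_eq_iff fscale_def col_def)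
    finally show ?thesis .
  qed
  have "\<forall>c\<in>Cs. \<beta> c = 0"
  proof
    fix c assume c: "c \<in> Cs"
    have "\<beta> (the_inv_into Cs col (col c)) = 0"
      using fvs.independentD[OF Cs(3)[folded col_def] finite_imageI[OF Cs(1)] subset_refl sum0] c by blast
    then show "\<beta> c = 0" using the_inv_into_f_f[OF Cs(2)[folded col_def] c] by simp
  qed
  then have "\<beta> = 0" using \<beta>out by (auto simp: fun_eq_iff)
  then show False using \<beta>(3) by simp
qed

definition tens :: "('x \<Rightarrow> 'a) \<Rightarrow> ('y \<Rightarrow> 'a) \<Rightarrow> ('x \<times> 'y \<Rightarrow> 'a::field)" where
  "tens u w = (\<lambda>p. u (fst p) * w (snd p))"

definition emb :: "'p \<Rightarrow> ('y \<Rightarrow> 'a) \<Rightarrow> ('p \<times> 'y \<Rightarrow> 'a::field)" where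
  "emb P v = (\<lambda>(Q, y). if Q = P then v y else 0)"

lemma emb_hom: "module_hom fscale fscale (emb P)"
  by (rule mhI) (auto simp: emb_def fscale_def fun_eq_iff)

lemma rowmap_hom: "module_hom fscale fscale (\<lambda>(g::'x \<times> 'y \<Rightarrow> 'a::field). (\<lambda>y. g (x, y)))"
  by (rule mhI) (auto simp: fscale_def fun_eq_iff)

lemma colmap_hom: "module_hom fscale fscale (\<lambda>(g::'x \<times> 'y \<Rightarrow> 'a::field). (\<lambda>x. g (x, y)))"
  by (rule mhI) (auto simp: fscale_def fun_eq_iff)

lemma row_in_span:
  assumes "g \<in> fvs.span ((\<lambda>k. tens (u k) (w k)) ` P)"
  shows "(\<lambda>y. g (x, y)) \<in> fvs.span (w ` P)"
proof (rule hom_in_span[OF rowmap_hom assms])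
  show "(\<lambda>g. \<lambda>y. g (x, y)) ` (\<lambda>k. tens (u k) (w k)) ` P \<subseteq> fvs.span (w ` P)"
  proof
    fix z assume "z \<in> (\<lambda>g. \<lambda>y. g (x, y)) ` (\<lambda>k. tens (u k) (w k)) ` P"
    then obtain k where k: "k \<in> P" "z = (\<lambda>y. tens (u k) (w k) (x, y))" by blast
    then have "z = fscale (u k x) (w k)" by (simp add: tens_def fscale_def fun_eq_iff)
    then show "z \<in> fvs.span (w ` P)" using k(1) by (simp add: fvs.span_base fvs.span_scale)
  qed
qed

lemma col_in_span:
  assumes "g \<in> fvs.span ((\<lambda>k. tens (u k) (w k)) ` P)"
  shows "(\<lambda>x. g (x, y)) \<in> fvs.span (u ` P)"
proof (rule hom_in_span[OF colmap_hom assms])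
  show "(\<lambda>g. \<lambda>x. g (x, y)) ` (\<lambda>k. tens (u k) (w k)) ` P \<subseteq> fvs.span (u ` P)"
  proof
    fix z assume "z \<in> (\<lambda>g. \<lambda>x. g (x, y)) ` (\<lambda>k. tens (u k) (w k)) ` P"
    then obtain k where k: "k \<in> P" "z = (\<lambda>x. tens (u k) (w k) (x, y))" by blast
    then have "z = fscale (w k y) (u k)" by (simp add: tens_def fscale_def fun_eq_iff mult.commute)
    then show "z \<in> fvs.span (u ` P)" using k(1) by (simp add: fvs.span_base fvs.span_scale)
  qed
qed

lemma P2_rows:
  fixes u :: "'k \<Rightarrow> 'x \<Rightarrow> 'a::field" and w :: "'k \<Rightarrow> 'y \<Rightarrow> 'a"
  assumes fin: "finite I" "\<forall>P\<in>I. finite P"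
    and gP: "\<forall>P\<in>I. g P \<in> fvs.span ((\<lambda>k. tens (u k) (w k)) ` P)"
    and sum: "(\<Sum>P\<in>I. g P) = tens ue we"
    and G: "G = (\<lambda>x (P, y). if P \<in> I then g P (x, y) else (0::'a))"
  shows "\<exists>W. finite W \<and> range G \<subseteq> fvs.span W"
    and "fvs.dim (range G) + fvs.dim (w ` \<Union>I) \<le> 1 + (\<Sum>P\<in>I. fvs.dim (w ` P))"
proof -
  define W where "W = (\<Union>P\<in>I. emb P ` (w ` P))"
  have fW: "finite W" using fin by (auto simp: W_def)
  have Gx: "G x = (\<Sum>P\<in>I. emb P (\<lambda>y. g P (x, y)))" for x
  proof
    fix c :: "'k set \<times> 'y"
    obtain Q y where c: "c = (Q, y)" by (cases c)
    have "(\<Sum>P\<in>I. emb P (\<lambda>y. g P (x, y))) c = (\<Sum>P\<in>I. if Q = P then g P (x, y) else 0)"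
      by (simp add: c emb_def)
    also have "\<dots> = (if Q \<in> I then g Q (x, y) else 0)" using fin(1) by (simp add: sum.delta')
    finally show "G x c = (\<Sum>P\<in>I. emb P (\<lambda>y. g P (x, y))) c" by (simp add: G c)
  qed
  have GW: "range G \<subseteq> fvs.span W"
  proof
    fix z assume "z \<in> range G"
    then obtain x where x: "z = G x" by blast
    have "emb P (\<lambda>y. g P (x, y)) \<in> fvs.span W" if P: "P \<in> I" for P
    proof (rule hom_in_span[OF emb_hom row_in_span])
      show "g P \<in> fvs.span ((\<lambda>k. tens (u k) (w k)) ` P)" using gP P by blast
      show "emb P ` w ` P \<subseteq> fvs.span W" using P fvs.span_superset[of W] unfolding W_def by blast
    qed
    then show "z \<in> fvs.span W" unfolding x Gx by (intro fvs.span_sum)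
  qed
  then show "\<exists>W. finite W \<and> range G \<subseteq> fvs.span W" using fW by blast
  define Sm :: "('k set \<times> 'y \<Rightarrow> 'a) \<Rightarrow> ('y \<Rightarrow> 'a)" where "Sm = (\<lambda>R y. \<Sum>P\<in>I. R (P, y))"
  have mSm: "module_hom fscale fscale Sm"
    by (rule mhI) (auto simp: Sm_def fscale_def fun_eq_iff sum.distrib sum_distrib_left)
  have SmG: "Sm (G x) = fscale (ue x) we" for x
  proof
    fix y
    have "Sm (G x) y = (\<Sum>P\<in>I. g P (x, y))" by (simp add: Sm_def G)
    also have "\<dots> = (\<Sum>P\<in>I. g P) (x, y)" by simp
    also have "\<dots> = ue x * we y" using sum by (simp add: tens_def)
    finally show "Sm (G x) y = fscale (ue x) we y" by (simp add: fscale_def)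
  qed
  have Smemb: "Sm (emb P v) = v" if "P \<in> I" for P v
    using that fin(1) by (simp add: Sm_def emb_def fun_eq_iff sum.delta)
  have dW: "fvs.dim (fvs.span W) \<le> (\<Sum>P\<in>I. fvs.dim (w ` P))"
  proof -
    have "fvs.dim (fvs.span W) = fvs.dim W" by simp
    also have "\<dots> \<le> (\<Sum>P\<in>I. fvs.dim (emb P ` w ` P))"
      unfolding W_def using fin by (intro dim_UN_le) auto
    also have "\<dots> \<le> (\<Sum>P\<in>I. fvs.dim (w ` P))"
      using fin by (intro sum_mono dim_image_le[OF emb_hom]) auto
    finally show ?thesis .
  qed
  have RNW: "fvs.dim (fvs.span W) = fvs.dim (Sm ` fvs.span W) + fvs.dim (fvs.span W \<inter> {v. Sm v = 0})"
    by (rule rank_nullity[OF mSm fW])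
  have wSm: "fvs.dim (w ` \<Union>I) \<le> fvs.dim (Sm ` fvs.span W)"
  proof (rule dim_mono_sub[of "Sm ` W"])
    show "finite (Sm ` W)" using fW by simp
    show "Sm ` fvs.span W \<subseteq> fvs.span (Sm ` W)" using module_hom.span_image[OF mSm] by simp
    show "w ` \<Union>I \<subseteq> Sm ` fvs.span W"
    proof
      fix z assume "z \<in> w ` \<Union>I"
      then obtain P k where Pk: "P \<in> I" "k \<in> P" "z = w k" by blast
      have "emb P (w k) \<in> fvs.span W" using Pk unfolding W_def by (intro fvs.span_base) blast
      moreover have "Sm (emb P (w k)) = z" using Smemb[OF Pk(1)] Pk(3) by simp
      ultimately show "z \<in> Sm ` fvs.span W" by (metis image_eqI)
    qed
  qed
  obtain Bg where Bg: "Bg \<subseteq> range G" "fvs.independent Bg" "range G \<subseteq> fvs.span Bg" "finite Bg"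
    "card Bg = fvs.dim (range G)"
    by (rule basis_of_sub[OF fW GW])
  have RNB: "fvs.dim (fvs.span Bg) = fvs.dim (Sm ` fvs.span Bg) + fvs.dim (fvs.span Bg \<inter> {v. Sm v = 0})"
    by (rule rank_nullity[OF mSm Bg(4)])
  have dG: "fvs.dim (range G) = fvs.dim (fvs.span Bg)"
    using Bg(5) fvs.dim_eq_card_independent[OF Bg(2)] by simp
  have d1: "fvs.dim (Sm ` fvs.span Bg) \<le> 1"
  proof -
    have "Sm ` Bg \<subseteq> fvs.span {we}"
    proof
      fix z assume "z \<in> Sm ` Bg"
      then obtain x where "z = Sm (G x)" using Bg(1) by blast
      then show "z \<in> fvs.span {we}" using SmG by (simp add: fvs.span_base fvs.span_scale)
    qed
    then have "Sm ` fvs.span Bg \<subseteq> fvs.span {we}"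
      using module_hom.span_image[OF mSm, of Bg] span_subset_span by metis
    then have "fvs.dim (Sm ` fvs.span Bg) \<le> fvs.dim {we}" by (intro dim_mono_fin) auto
    also have "\<dots> \<le> card {we}" by (rule fvs.dim_le_card') simp
    finally show ?thesis by simp
  qed
  have dk: "fvs.dim (fvs.span Bg \<inter> {v. Sm v = 0}) \<le> fvs.dim (fvs.span W \<inter> {v. Sm v = 0})"
  proof (rule dim_mono_sub[OF fW])
    show "fvs.span W \<inter> {v. Sm v = 0} \<subseteq> fvs.span W" by (rule Int_lower1)
    have "fvs.span Bg \<subseteq> fvs.span W" using Bg(1) GW by (intro span_subset_span) (rule subset_trans)
    then show "fvs.span Bg \<inter> {v. Sm v = 0} \<subseteq> fvs.span W \<inter> {v. Sm v = 0}" by blast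
  qed
  show "fvs.dim (range G) + fvs.dim (w ` \<Union>I) \<le> 1 + (\<Sum>P\<in>I. fvs.dim (w ` P))"
    using dG RNB d1 dk RNW wSm dW by linarith
qed


lemma sum_diff_card_le:
  fixes a b :: "'p \<Rightarrow> nat"
  assumes "finite I" "\<forall>P\<in>I. 1 \<le> b P \<and> b P \<le> a P"
  shows "(\<Sum>P\<in>I. a P - b P) + card I \<le> (\<Sum>P\<in>I. a P)"
proof -
  have "(\<Sum>P\<in>I. a P - b P) + card I = (\<Sum>P\<in>I. a P - b P + 1)"
    by (simp add: sum.distrib del: add_2_eq_Suc' Suc_eq_plus1 add_Suc_right)
  also have "\<dots> \<le> (\<Sum>P\<in>I. a P)" using assms(2) by (intro sum_mono) auto
  finally show ?thesis .
qed

lemma P2_cols: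
  fixes u :: "'k \<Rightarrow> 'x \<Rightarrow> 'a::field" and w :: "'k \<Rightarrow> 'y \<Rightarrow> 'a"
  assumes fin: "finite I" "\<forall>P\<in>I. finite P"
    and gP: "\<forall>P\<in>I. g P \<in> fvs.span ((\<lambda>k. tens (u k) (w k)) ` P) \<and> g P \<noteq> 0"
    and G: "G = (\<lambda>x (P, y). if P \<in> I then g P (x, y) else (0::'a))"
    and rowsfin: "\<exists>W. finite W \<and> range G \<subseteq> fvs.span W"
  shows "fvs.dim (u ` \<Union>I) + card I \<le> fvs.dim (range G) + (\<Sum>P\<in>I. fvs.dim (u ` P))"
proof -
  obtain W where W: "finite W" "range G \<subseteq> fvs.span W" using rowsfin by blast
  define colG where "colG = (\<lambda>c x. G x c)"
  define Col where "Col = range colG"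
  have fU: "finite (u ` \<Union>I)" using fin by simp
  have colP: "colG (P, y) = (\<lambda>x. g P (x, y))" if "P \<in> I" for P y
    using that by (simp add: colG_def G)
  have Col_sub: "Col \<subseteq> fvs.span (u ` \<Union>I)"
  proof
    fix z assume "z \<in> Col"
    then obtain P y where z: "z = colG (P, y)" unfolding Col_def by auto
    show "z \<in> fvs.span (u ` \<Union>I)"
    proof (cases "P \<in> I")
      case True
      then have "z \<in> fvs.span (u ` P)" using z colP col_in_span gP by metis
      moreover have "fvs.span (u ` P) \<subseteq> fvs.span (u ` \<Union>I)" using True by (intro fvs.span_mono) blast
      ultimately show ?thesis by blast
    next
      case False
      then have "z = 0" using z by (simp add: colG_def G fun_eq_iff)
      then show ?thesis by (simp add: fvs.span_zero)
    qed
  qed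
  obtain Bc where Bc: "Bc \<subseteq> Col" "fvs.independent Bc" "Col \<subseteq> fvs.span Bc" "finite Bc" "card Bc = fvs.dim Col"
    by (rule basis_of_sub[OF fU Col_sub])
  define sel where "sel = (\<lambda>b. SOME c. colG c = b)"
  have sel: "colG (sel b) = b" if "b \<in> Bc" for b
  proof -
    have "\<exists>c. colG c = b" using that Bc(1) unfolding Col_def by blast
    then show ?thesis unfolding sel_def by (rule someI_ex)
  qed
  define Cs where "Cs = sel ` Bc"
  have injsel: "inj_on sel Bc" using sel by (metis inj_onI)
  have colCs: "colG ` Cs = Bc" unfolding Cs_def using sel by (auto simp: image_image)
  have injcol: "inj_on colG Cs" unfolding Cs_def using sel by (auto simp: inj_on_def)
  have cCs: "card Cs = card Bc" unfolding Cs_def by (rule card_image[OF injsel])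
  have "card Cs \<le> fvs.dim (range G)"
  proof (rule col_le_row[OF W])
    show "finite Cs" using Bc(4) Cs_def by simp
    show "inj_on (\<lambda>c r. G r c) Cs" using injcol unfolding colG_def .
    show "fvs.independent ((\<lambda>c r. G r c) ` Cs)" using colCs Bc(2) unfolding colG_def by simp
  qed
  then have dCol: "fvs.dim Col \<le> fvs.dim (range G)" using cCs Bc(5) by simp
  define CP where "CP = (\<lambda>P. range (\<lambda>y. \<lambda>x. g P (x, y)))"
  have CPsub: "CP P \<subseteq> fvs.span (u ` P)" if "P \<in> I" for P
  proof
    fix z assume "z \<in> CP P"
    then obtain y where "z = (\<lambda>x. g P (x, y))" unfolding CP_def by blast
    moreover have "g P \<in> fvs.span ((\<lambda>k. tens (u k) (w k)) ` P)" using gP that by blast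
    ultimately show "z \<in> fvs.span (u ` P)" using col_in_span[of "g P" u w P y] by simp
  qed
  have CPCol: "CP P \<subseteq> Col" if "P \<in> I" for P
    unfolding CP_def Col_def using colP[OF that] by (metis (no_types, lifting) image_subset_iff rangeI)
  have ex0: "\<exists>BE. fst BE \<subseteq> CP P \<and> CP P \<subseteq> fvs.span (fst BE) \<and> finite (fst BE)
      \<and> card (fst BE) = fvs.dim (CP P) \<and> fst BE \<subseteq> snd BE
      \<and> u ` P \<subseteq> fvs.span (snd BE) \<and> finite (snd BE) \<and> card (snd BE) = fvs.dim (u ` P)"
    if P: "P \<in> I" for P
  proof -
    have fP: "finite (u ` P)" using fin P by simp
    obtain BP where BP: "BP \<subseteq> CP P" "fvs.independent BP" "CP P \<subseteq> fvs.span BP" "finite BP" "card BP = fvs.dim (CP P)"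
      by (rule basis_of_sub[OF fP CPsub[OF P]])
    have BPs: "BP \<subseteq> fvs.span (u ` P)" using BP(1) CPsub[OF P] by (rule subset_trans)
    obtain EP where EP: "BP \<subseteq> EP" "EP \<subseteq> fvs.span (u ` P)" "fvs.independent EP" "fvs.span (u ` P) \<subseteq> fvs.span EP"
      by (rule fvs.maximal_independent_subset_extend[OF BPs BP(2)])
    have fEP: "finite EP" using fvs.independent_span_bound[OF fP EP(3) EP(2)] by blast
    have cEP: "card EP = fvs.dim (u ` P)"
      using fvs.basis_card_eq_dim[OF EP(2) EP(4) EP(3)] by simp
    have "u ` P \<subseteq> fvs.span EP" using EP(4) fvs.span_superset[of "u ` P"] by (rule subset_trans[rotated])
    then show ?thesis using BP EP fEP cEP by (intro exI[of _ "(BP, EP)"]) simp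
  qed
  have ex: "\<forall>P\<in>I. \<exists>BE. fst BE \<subseteq> CP P \<and> CP P \<subseteq> fvs.span (fst BE) \<and> finite (fst BE)
      \<and> card (fst BE) = fvs.dim (CP P) \<and> fst BE \<subseteq> snd BE
      \<and> u ` P \<subseteq> fvs.span (snd BE) \<and> finite (snd BE) \<and> card (snd BE) = fvs.dim (u ` P)"
    by (intro ballI ex0)
  obtain BE where BE: "\<forall>P\<in>I. fst (BE P) \<subseteq> CP P \<and> CP P \<subseteq> fvs.span (fst (BE P)) \<and> finite (fst (BE P))
      \<and> card (fst (BE P)) = fvs.dim (CP P) \<and> fst (BE P) \<subseteq> snd (BE P)
      \<and> u ` P \<subseteq> fvs.span (snd (BE P)) \<and> finite (snd (BE P)) \<and> card (snd (BE P)) = fvs.dim (u ` P)"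
    using bchoice[OF ex] by (elim exE) iprover
  define BP where "BP = (\<lambda>P. fst (BE P))"
  define EP where "EP = (\<lambda>P. snd (BE P))"
  define X where "X = Bc \<union> (\<Union>P\<in>I. EP P - BP P)"
  have fX: "finite X" unfolding X_def using Bc(4) fin BE EP_def by auto
  have EPX: "EP P \<subseteq> fvs.span X" if P: "P \<in> I" for P
  proof
    fix e assume e: "e \<in> EP P"
    show "e \<in> fvs.span X"
    proof (cases "e \<in> BP P")
      case True
      then have "e \<in> Col" using BE P CPCol[OF P] unfolding BP_def by blast
      then have "e \<in> fvs.span Bc" using Bc(3) by blast
      moreover have "fvs.span Bc \<subseteq> fvs.span X" unfolding X_def by (intro fvs.span_mono) blast
      ultimately show ?thesis by blast
    next
      case False
      then have "e \<in> X" using e P unfolding X_def by blast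
      then show ?thesis by (rule fvs.span_base)
    qed
  qed
  have UX: "u ` \<Union>I \<subseteq> fvs.span X"
  proof
    fix z assume "z \<in> u ` \<Union>I"
    then obtain P k where Pk: "P \<in> I" "k \<in> P" "z = u k" by blast
    have "z \<in> fvs.span (EP P)" using BE Pk unfolding EP_def by blast
    moreover have "fvs.span (EP P) \<subseteq> fvs.span X" using EPX[OF Pk(1)] by (rule span_subset_span)
    ultimately show "z \<in> fvs.span X" by blast
  qed
  have "fvs.dim (u ` \<Union>I) \<le> card X" using UX fX by (rule fvs.dim_le_card)
  also have "\<dots> \<le> card Bc + card (\<Union>P\<in>I. EP P - BP P)" unfolding X_def by (rule card_Un_le)
  also have "\<dots> \<le> card Bc + (\<Sum>P\<in>I. card (EP P - BP P))" using card_UN_le[OF fin(1)] by simp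
  also have "(\<Sum>P\<in>I. card (EP P - BP P)) = (\<Sum>P\<in>I. fvs.dim (u ` P) - fvs.dim (CP P))"
  proof (rule sum.cong[OF refl])
    fix P assume P: "P \<in> I"
    have "card (EP P - BP P) = card (EP P) - card (BP P)"
      using BE P unfolding EP_def BP_def by (intro card_Diff_subset) (auto intro: finite_subset)
    then show "card (EP P - BP P) = fvs.dim (u ` P) - fvs.dim (CP P)" using BE P unfolding EP_def BP_def by simp
  qed
  finally have 1: "fvs.dim (u ` \<Union>I) \<le> fvs.dim Col + (\<Sum>P\<in>I. fvs.dim (u ` P) - fvs.dim (CP P))"
    using Bc(5) by simp
  have bnd: "\<forall>P\<in>I. 1 \<le> fvs.dim (CP P) \<and> fvs.dim (CP P) \<le> fvs.dim (u ` P)"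
  proof
    fix P assume P: "P \<in> I"
    have le: "fvs.dim (CP P) \<le> fvs.dim (u ` P)"
    proof -
      have "card (BP P) \<le> card (EP P)" using BE P unfolding EP_def BP_def by (intro card_mono) auto
      then show ?thesis using BE P unfolding EP_def BP_def by simp
    qed
    obtain p where p: "g P p \<noteq> 0" using gP P by (metis fun_eq_iff zero_fun_def)
    obtain x y where xy: "p = (x, y)" by (cases p)
    have nz: "(\<lambda>x. g P (x, y)) \<noteq> 0" using p xy by (metis zero_fun_def)
    have mem: "(\<lambda>x. g P (x, y)) \<in> CP P" unfolding CP_def by blast
    have "fvs.dim (CP P) \<noteq> 0"
    proof
      assume "fvs.dim (CP P) = 0"
      then have e: "BP P = {}" using BE P unfolding BP_def by auto
      have "CP P \<subseteq> fvs.span (BP P)" using BE P unfolding BP_def by blast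
      then have "CP P \<subseteq> {0}" using e by simp
      then show False using mem nz by blast
    qed
    then show "1 \<le> fvs.dim (CP P) \<and> fvs.dim (CP P) \<le> fvs.dim (u ` P)" using le by simp
  qed
  have 2: "(\<Sum>P\<in>I. fvs.dim (u ` P) - fvs.dim (CP P)) + card I \<le> (\<Sum>P\<in>I. fvs.dim (u ` P))"
    by (rule sum_diff_card_le[OF fin(1) bnd])
  show ?thesis using 1 2 dCol by linarith
qed

lemma P2:
  fixes u :: "'k \<Rightarrow> 'x \<Rightarrow> 'a::field" and w :: "'k \<Rightarrow> 'y \<Rightarrow> 'a"
  assumes fin: "finite I" "\<forall>P\<in>I. finite P"
    and gP: "\<forall>P\<in>I. g P \<in> fvs.span ((\<lambda>k. tens (u k) (w k)) ` P) \<and> g P \<noteq> 0"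
    and sum: "(\<Sum>P\<in>I. g P) = tens ue we"
  shows "fvs.dim (u ` \<Union>I) + fvs.dim (w ` \<Union>I) + card I
           \<le> (\<Sum>P\<in>I. fvs.dim (u ` P) + fvs.dim (w ` P)) + 1"
proof -
  define G where "G = (\<lambda>x (P, y). if P \<in> I then g P (x, y) else (0::'a))"
  have gP1: "\<forall>P\<in>I. g P \<in> fvs.span ((\<lambda>k. tens (u k) (w k)) ` P)" using gP by blast
  note R = P2_rows[OF fin gP1 sum G_def]
  have C: "fvs.dim (u ` \<Union>I) + card I \<le> fvs.dim (range G) + (\<Sum>P\<in>I. fvs.dim (u ` P))"
    by (rule P2_cols[OF fin gP G_def R(1)])
  show ?thesis using R(2) C by (simp add: sum.distrib)
qed

definition is_part :: "'k set \<Rightarrow> 'k set set \<Rightarrow> bool" where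
  "is_part K PP \<longleftrightarrow> (\<forall>P\<in>PP. P \<noteq> {}) \<and> \<Union>PP = K \<and> (\<forall>P\<in>PP. \<forall>Q\<in>PP. P \<noteq> Q \<longrightarrow> P \<inter> Q = {})"

lemma is_part_finite: "finite K \<Longrightarrow> is_part K PP \<Longrightarrow> finite PP"
  unfolding is_part_def by (metis Pow_iff finite_Pow_iff rev_finite_subset subsetI Union_upper)

lemma dim_single_nz: "x \<noteq> 0 \<Longrightarrow> fvs.dim {x} = 1"
  using fvs.dim_eq_card_independent[of "{x}"] by simp

lemma tens_nz: "u \<noteq> 0 \<Longrightarrow> w \<noteq> 0 \<Longrightarrow> tens u w \<noteq> 0"
proof -
  assume "u \<noteq> 0" "w \<noteq> 0"
  then obtain x y where "u x \<noteq> 0" "w y \<noteq> 0" by (metis fun_eq_iff zero_fun_def)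
  then have "tens u w (x, y) \<noteq> 0" by (simp add: tens_def)
  then show "tens u w \<noteq> 0" by (metis zero_fun_def)
qed

lemma scale_in_span_imp: "fscale c v \<in> fvs.span S \<Longrightarrow> c \<noteq> 0 \<Longrightarrow> v \<in> fvs.span S"
proof -
  assume a: "fscale c v \<in> fvs.span S" "c \<noteq> 0"
  have "fscale (inverse c) (fscale c v) = v" using a(2) by (simp add: fscale_def fun_eq_iff)
  then show ?thesis using fvs.span_scale[OF a(1), of "inverse c"] by simp
qed

lemma STstar:
  fixes u :: "'k \<Rightarrow> 'x \<Rightarrow> 'a::field" and w :: "'k \<Rightarrow> 'y \<Rightarrow> 'a"
  assumes "finite K" "\<forall>k\<in>K. u k \<noteq> 0 \<and> w k \<noteq> 0"
  shows "\<exists>PP. is_part K PP \<and> fvs.dim ((\<lambda>k. tens (u k) (w k)) ` K) = (\<Sum>P\<in>PP. fvs.dim ((\<lambda>k. tens (u k) (w k)) ` P))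
     \<and> (\<Sum>P\<in>PP. fvs.dim (u ` P) + fvs.dim (w ` P)) \<le> fvs.dim ((\<lambda>k. tens (u k) (w k)) ` K) + card PP"
  using assms
proof (induction K rule: finite_induct)
  case empty
  show ?case by (intro exI[of _ "{}"]) (simp add: is_part_def dim_zero_set fvs.dim_eq_card_independent[OF fvs.independent_empty])
next
  case (insert e K)
  define T where "T = (\<lambda>k. tens (u k) (w k))"
  obtain PP where PP: "is_part K PP" "fvs.dim (T ` K) = (\<Sum>P\<in>PP. fvs.dim (T ` P))"
     "(\<Sum>P\<in>PP. fvs.dim (u ` P) + fvs.dim (w ` P)) \<le> fvs.dim (T ` K) + card PP"
    using insert.IH insert.prems unfolding T_def by auto
  have fPP: "finite PP" using is_part_finite[OF insert.hyps(1) PP(1)] .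
  have UPP: "\<Union>PP = K" using PP(1) unfolding is_part_def by blast
  have fP: "\<forall>P\<in>PP. finite P" using UPP insert.hyps(1) by (metis Union_upper finite_subset)
  have ue: "u e \<noteq> 0" and we: "w e \<noteq> 0" using insert.prems by auto
  have Te: "T e \<noteq> 0" unfolding T_def using tens_nz[OF ue we] .
  have TK: "T ` K = (\<Union>P\<in>PP. T ` P)" using UPP by blast
  show ?case
  proof (cases "T e \<in> fvs.span (T ` K)")
    case False
    define PP' where "PP' = insert {e} PP"
    have eP: "{e} \<notin> PP" using UPP insert.hyps(2) by blast
    have part: "is_part (insert e K) PP'"
      using PP(1) insert.hyps(2) unfolding is_part_def PP'_def by blast
    have d: "fvs.dim (T ` insert e K) = fvs.dim (T ` K) + 1"
      using dim_insert_notin[OF finite_imageI[OF insert.hyps(1)] False] by simp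
    have 1: "fvs.dim (T ` insert e K) = (\<Sum>P\<in>PP'. fvs.dim (T ` P))"
      using d PP(2) fPP eP dim_single_nz[OF Te] unfolding PP'_def by simp
    have 2: "(\<Sum>P\<in>PP'. fvs.dim (u ` P) + fvs.dim (w ` P)) \<le> fvs.dim (T ` insert e K) + card PP'"
      using d PP(3) fPP eP dim_single_nz[OF ue] dim_single_nz[OF we] unfolding PP'_def by simp
    show ?thesis using part 1 2 unfolding T_def by (intro exI[of _ PP'] conjI)
  next
    case True
    then have "T e \<in> fvs.span (\<Union>P\<in>PP. T ` P)" using TK by simp
    then obtain g where g: "\<forall>P\<in>PP. g P \<in> fvs.span (T ` P)" "T e = (\<Sum>P\<in>PP. g P)"
      using span_UN_decomp[OF fPP] by blast
    define I where "I = {P\<in>PP. g P \<noteq> 0}"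
    have IPP: "I \<subseteq> PP" unfolding I_def by blast
    have fI: "finite I" using fPP IPP finite_subset by blast
    have sumI: "T e = (\<Sum>P\<in>I. g P)"
      unfolding g(2) I_def using fPP by (intro sum.mono_neutral_right) auto
    have Ine: "I \<noteq> {}" using sumI Te by auto
    define M where "M = insert e (\<Union>I)"
    define PP' where "PP' = insert M (PP - I)"
    have MPP: "M \<notin> PP - I" using UPP insert.hyps(2) unfolding M_def by blast
    have part: "is_part (insert e K) PP'"
    proof -
      have "\<forall>P\<in>PP'. P \<noteq> {}" using PP(1) unfolding PP'_def M_def is_part_def by blast
      moreover have "\<Union>PP' = insert e K" using UPP IPP unfolding PP'_def M_def by blast
      moreover have "\<forall>P\<in>PP'. \<forall>Q\<in>PP'. P \<noteq> Q \<longrightarrow> P \<inter> Q = {}"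
      proof -
        have disj: "\<forall>P\<in>PP. \<forall>Q\<in>PP. P \<noteq> Q \<longrightarrow> P \<inter> Q = {}" using PP(1) unfolding is_part_def by blast
        have "\<forall>Q\<in>PP - I. M \<inter> Q = {}"
        proof
          fix Q assume Q: "Q \<in> PP - I"
          have "e \<notin> Q" using Q UPP insert.hyps(2) by blast
          moreover have "\<Union>I \<inter> Q = {}"
          proof -
            have "P \<inter> Q = {}" if P: "P \<in> I" for P
            proof -
              have "P \<in> PP" "Q \<in> PP" "P \<noteq> Q" using P Q IPP by auto
              then show ?thesis using disj by simp
            qed
            then show ?thesis by blast
          qed
          ultimately show "M \<inter> Q = {}" unfolding M_def by blast
        qed
        then show ?thesis using disj unfolding PP'_def by blast
      qed
      ultimately show ?thesis unfolding is_part_def by blast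
    qed
    have fTP: "\<And>P. P \<in> PP \<Longrightarrow> finite (T ` P)" using fP by blast
    have dUI: "fvs.dim (\<Union>P\<in>I. T ` P) = (\<Sum>P\<in>I. fvs.dim (T ` P))"
    proof (rule dim_UN_sub_eq[OF fPP fTP _ IPP])
      show "fvs.dim (\<Union>P\<in>PP. T ` P) = (\<Sum>P\<in>PP. fvs.dim (T ` P))" using PP(2) by (simp only: TK)
    qed
    have TeI: "T e \<in> fvs.span (T ` \<Union>I)"
    proof -
      have "g P \<in> fvs.span (T ` \<Union>I)" if "P \<in> I" for P
        using g(1) that IPP fvs.span_mono[of "T ` P" "T ` \<Union>I"] by blast
      then show ?thesis unfolding sumI by (intro fvs.span_sum)
    qed
    have dTM: "fvs.dim (T ` M) = (\<Sum>P\<in>I. fvs.dim (T ` P))"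
    proof -
      have "fvs.dim (T ` M) = fvs.dim (T ` \<Union>I)" unfolding M_def image_insert using dim_insert_in[OF TeI] .
      also have "T ` \<Union>I = (\<Union>P\<in>I. T ` P)" by blast
      finally show ?thesis using dUI by simp
    qed
    have d: "fvs.dim (T ` insert e K) = fvs.dim (T ` K)"
      unfolding image_insert using dim_insert_in[OF True] .
    have 1: "fvs.dim (T ` insert e K) = (\<Sum>P\<in>PP'. fvs.dim (T ` P))"
    proof -
      have "(\<Sum>P\<in>PP'. fvs.dim (T ` P)) = fvs.dim (T ` M) + (\<Sum>P\<in>PP - I. fvs.dim (T ` P))"
        unfolding PP'_def using MPP fPP by simp
      also have "\<dots> = (\<Sum>P\<in>PP. fvs.dim (T ` P))"
        using dTM sum.subset_diff[OF IPP fPP, of "\<lambda>P. fvs.dim (T ` P)"] by simp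
      finally show ?thesis using d PP(2) by simp
    qed
    obtain y where y: "w e y \<noteq> 0" using we by (metis fun_eq_iff zero_fun_def)
    obtain x where x: "u e x \<noteq> 0" using ue by (metis fun_eq_iff zero_fun_def)
    have gPI: "\<forall>P\<in>I. g P \<in> fvs.span (T ` P) \<and> g P \<noteq> 0" using g(1) IPP unfolding I_def by blast
    have ueI: "u e \<in> fvs.span (u ` \<Union>I)"
    proof -
      have "(\<lambda>x. T e (x, y)) \<in> fvs.span (u ` \<Union>I)"
        using col_in_span[OF TeI[unfolded T_def]] unfolding T_def .
      moreover have "(\<lambda>x. T e (x, y)) = fscale (w e y) (u e)"
        by (simp add: T_def tens_def fscale_def fun_eq_iff mult.commute)
      ultimately show ?thesis using scale_in_span_imp y by metis
    qed
    have weI: "w e \<in> fvs.span (w ` \<Union>I)"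
    proof -
      have "(\<lambda>y. T e (x, y)) \<in> fvs.span (w ` \<Union>I)"
        using row_in_span[OF TeI[unfolded T_def]] unfolding T_def .
      moreover have "(\<lambda>y. T e (x, y)) = fscale (u e x) (w e)"
        by (simp add: T_def tens_def fscale_def fun_eq_iff)
      ultimately show ?thesis using scale_in_span_imp x by metis
    qed
    have duM: "fvs.dim (u ` M) = fvs.dim (u ` \<Union>I)" unfolding M_def image_insert using dim_insert_in[OF ueI] .
    have dwM: "fvs.dim (w ` M) = fvs.dim (w ` \<Union>I)" unfolding M_def image_insert using dim_insert_in[OF weI] .
    have fPI: "\<forall>P\<in>I. finite P" using fP IPP by blast
    have p2: "fvs.dim (u ` \<Union>I) + fvs.dim (w ` \<Union>I) + card I
           \<le> (\<Sum>P\<in>I. fvs.dim (u ` P) + fvs.dim (w ` P)) + 1"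
      by (rule P2[OF fI fPI gPI[unfolded T_def] sumI[unfolded T_def, symmetric]])
    have cI: "card I \<le> card PP" using card_mono[OF fPP IPP] .
    have cPP': "card PP' = card PP - card I + 1"
      unfolding PP'_def using MPP fPP card_Diff_subset[OF fI IPP] cI by simp
    have 2: "(\<Sum>P\<in>PP'. fvs.dim (u ` P) + fvs.dim (w ` P)) \<le> fvs.dim (T ` insert e K) + card PP'"
    proof -
      have "(\<Sum>P\<in>PP'. fvs.dim (u ` P) + fvs.dim (w ` P))
          = fvs.dim (u ` M) + fvs.dim (w ` M) + (\<Sum>P\<in>PP - I. fvs.dim (u ` P) + fvs.dim (w ` P))"
        unfolding PP'_def using MPP fPP by simp
      moreover have "(\<Sum>P\<in>PP. fvs.dim (u ` P) + fvs.dim (w ` P))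
          = (\<Sum>P\<in>I. fvs.dim (u ` P) + fvs.dim (w ` P)) + (\<Sum>P\<in>PP - I. fvs.dim (u ` P) + fvs.dim (w ` P))"
        using sum.subset_diff[OF IPP fPP, of "\<lambda>P. fvs.dim (u ` P) + fvs.dim (w ` P)"] by simp
      ultimately show ?thesis using p2 duM dwM PP(3) d cPP' cI by linarith
    qed
    show ?thesis using part 1 2 unfolding T_def by (intro exI[of _ PP'] conjI)
  qed
qed

definition conn :: "('k \<Rightarrow> 'i \<Rightarrow> 'a::field) \<Rightarrow> 'k set \<Rightarrow> bool" where
  "conn T K \<longleftrightarrow> (\<forall>A. A \<subseteq> K \<longrightarrow> A \<noteq> {} \<longrightarrow> A \<noteq> K \<longrightarrow> fvs.span (T ` A) \<inter> fvs.span (T ` (K - A)) \<noteq> {0})"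

lemma ST2:
  fixes u :: "'k \<Rightarrow> 'x \<Rightarrow> 'a::field" and w :: "'k \<Rightarrow> 'y \<Rightarrow> 'a"
  assumes K: "finite K" "K \<noteq> {}" and nz: "\<forall>k\<in>K. u k \<noteq> 0 \<and> w k \<noteq> 0"
    and c: "conn (\<lambda>k. tens (u k) (w k)) K"
  shows "fvs.dim (u ` K) + fvs.dim (w ` K) \<le> fvs.dim ((\<lambda>k. tens (u k) (w k)) ` K) + 1"
proof -
  define T where "T = (\<lambda>k. tens (u k) (w k))"
  obtain PP where PP: "is_part K PP" "fvs.dim (T ` K) = (\<Sum>P\<in>PP. fvs.dim (T ` P))"
     "(\<Sum>P\<in>PP. fvs.dim (u ` P) + fvs.dim (w ` P)) \<le> fvs.dim (T ` K) + card PP"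
    using STstar[OF K(1) nz] unfolding T_def by blast
  have fPP: "finite PP" using is_part_finite[OF K(1) PP(1)] .
  have UPP: "\<Union>PP = K" using PP(1) unfolding is_part_def by blast
  have fP: "\<And>P. P \<in> PP \<Longrightarrow> finite (T ` P)" using UPP K(1) by (metis Union_upper finite_subset finite_imageI)
  have PPne: "PP \<noteq> {}" using UPP K(2) by blast
  have "card PP \<le> 1"
  proof (rule ccontr)
    assume "\<not> card PP \<le> 1"
    then obtain P0 where P0: "P0 \<in> PP" using PPne by blast
    have "card (PP - {P0}) \<noteq> 0" using \<open>\<not> card PP \<le> 1\<close> P0 fPP by simp
    then obtain Q where Q: "Q \<in> PP" "Q \<noteq> P0" by (metis card_0_eq Diff_eq_empty_iff fPP finite_Diff subsetI singletonI DiffI)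
    have disj: "\<forall>P\<in>PP. \<forall>Q\<in>PP. P \<noteq> Q \<longrightarrow> P \<inter> Q = {}" and ne: "\<forall>P\<in>PP. P \<noteq> {}"
      using PP(1) unfolding is_part_def by blast+
    have KP0: "K - P0 = \<Union>(PP - {P0})" using UPP disj P0 by blast
    have A1: "P0 \<subseteq> K" "P0 \<noteq> {}" using UPP P0 ne by blast+
    have QK: "Q \<subseteq> K - P0" unfolding KP0 using Q by blast
    have Qne: "Q \<noteq> {}" using ne Q(1) by blast
    have A2: "P0 \<noteq> K" using QK Qne by blast
    have d1: "fvs.dim (\<Union>P\<in>PP - {P0}. T ` P) = (\<Sum>P\<in>PP - {P0}. fvs.dim (T ` P))"
    proof (rule dim_UN_sub_eq[OF fPP fP])
      have "T ` K = (\<Union>P\<in>PP. T ` P)" using UPP by blast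
      then show "fvs.dim (\<Union>P\<in>PP. T ` P) = (\<Sum>P\<in>PP. fvs.dim (T ` P))" using PP(2) by simp
    qed auto
    have "T ` (K - P0) = (\<Union>P\<in>PP - {P0}. T ` P)" using KP0 by blast
    then have d2: "fvs.dim (T ` (K - P0)) = (\<Sum>P\<in>PP - {P0}. fvs.dim (T ` P))" using d1 by simp
    have "fvs.dim (T ` P0 \<union> T ` (K - P0)) = fvs.dim (T ` K)" using A1 by (metis Un_Diff_cancel image_Un sup.absorb2)
    also have "\<dots> = fvs.dim (T ` P0) + fvs.dim (T ` (K - P0))"
      using PP(2) d2 sum.remove[OF fPP P0] by simp
    finally have "fvs.span (T ` P0) \<inter> fvs.span (T ` (K - P0)) = {0}"
      by (rule dim_add_imp_inter[OF fP[OF P0] finite_imageI[OF finite_Diff[OF K(1)]]])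
    moreover have "fvs.span (T ` P0) \<inter> fvs.span (T ` (K - P0)) \<noteq> {0}"
      using c A1 A2 unfolding conn_def T_def by simp
    ultimately show False by simp
  qed
  then have "card PP = 1" using PPne fPP by (simp add: card_gt_0_iff le_antisym Suc_leI)
  then obtain P where "PP = {P}" by (rule card_1_singletonE)
  then have "PP = {K}" using UPP by simp
  then show ?thesis using PP(3) unfolding T_def by simp
qed

definition pt :: "nat set \<Rightarrow> (nat \<Rightarrow> 'i \<Rightarrow> 'a) \<Rightarrow> (nat \<Rightarrow> 'i) \<Rightarrow> 'a::field" where
  "pt J f = (\<lambda>idx. \<Prod>j\<in>J. f j (idx j))"

lemma pt_nz:
  assumes "finite J" "\<forall>j\<in>J. f j \<noteq> 0"
  shows "pt J f \<noteq> 0"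
proof -
  define idx where "idx = (\<lambda>j. SOME x. f j x \<noteq> 0)"
  have "f j (idx j) \<noteq> 0" if "j \<in> J" for j
  proof -
    have "\<exists>x. f j x \<noteq> 0" using assms(2) that by (metis fun_eq_iff zero_fun_def)
    then show ?thesis unfolding idx_def by (rule someI_ex)
  qed
  then have "pt J f idx \<noteq> 0" using assms(1) by (simp add: pt_def)
  then show ?thesis by (metis zero_fun_def)
qed

lemma STJ:
  fixes F :: "'k \<Rightarrow> nat \<Rightarrow> 'i \<Rightarrow> 'a::field"
  assumes "finite J" "finite K" "K \<noteq> {}"
  shows "\<forall>k\<in>K. \<forall>j\<in>J. F k j \<noteq> 0 \<Longrightarrow> conn (\<lambda>k. pt J (F k)) K \<Longrightarrow>
    (\<Sum>j\<in>J. fvs.dim ((\<lambda>k. F k j) ` K)) + 1 \<le> fvs.dim ((\<lambda>k. pt J (F k)) ` K) + card J"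
  using assms(1)
proof (induction J rule: finite_induct)
  case empty
  have "(\<lambda>k. pt {} (F k)) ` K = {(\<lambda>_. 1)}" using assms(3) by (auto simp: pt_def)
  moreover have "(\<lambda>_::nat \<Rightarrow> 'i. 1::'a) \<noteq> 0" by (metis zero_fun_def zero_neq_one)
  ultimately show ?case using dim_single_nz[of "(\<lambda>_::nat \<Rightarrow> 'i. 1::'a)"] by simp
next
  case (insert j0 J')
  define u where "u = (\<lambda>k. F k j0)"
  define w where "w = (\<lambda>k. pt J' (F k))"
  define T where "T = (\<lambda>k. tens (u k) (w k))"
  define \<Theta> :: "('i \<times> (nat \<Rightarrow> 'i) \<Rightarrow> 'a) \<Rightarrow> ((nat \<Rightarrow> 'i) \<Rightarrow> 'a)" where
    "\<Theta> = (\<lambda>\<tau> idx. \<tau> (idx j0, idx))"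
  have m\<Theta>: "module_hom fscale fscale \<Theta>"
    by (rule mhI) (auto simp: \<Theta>_def fscale_def fun_eq_iff)
  have \<Theta>T: "\<Theta> (T k) = pt (insert j0 J') (F k)" for k
    using insert.hyps by (simp add: \<Theta>_def T_def tens_def u_def w_def pt_def fun_eq_iff)
  have ptK: "(\<lambda>k. pt (insert j0 J') (F k)) ` A = \<Theta> ` (T ` A)" for A
    using \<Theta>T by (auto simp: image_image)
  define V where "V = {\<tau> :: 'i \<times> (nat \<Rightarrow> 'i) \<Rightarrow> 'a. \<forall>x idx c. \<tau> (x, idx) = \<tau> (x, idx(j0 := c))}"
  have subV: "fvs.subspace V"
    by (auto simp: fvs.subspace_def V_def fscale_def)
  have TV: "T k \<in> V" for k
  proof -
    have "w k (idx(j0 := c)) = w k idx" for idx c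
      using insert.hyps(2) unfolding w_def pt_def by (intro prod.cong) auto
    then show ?thesis by (simp add: V_def T_def tens_def)
  qed
  have spV: "fvs.span (T ` K) \<subseteq> V" using TV subV by (intro fvs.span_minimal) auto
  have inj: "inj_on \<Theta> (fvs.span (T ` K))"
  proof -
    have "\<forall>\<tau>\<in>fvs.span (T ` K). \<Theta> \<tau> = 0 \<longrightarrow> \<tau> = 0"
    proof (intro ballI impI)
      fix \<tau> assume \<tau>: "\<tau> \<in> fvs.span (T ` K)" "\<Theta> \<tau> = 0"
      have "\<tau> p = 0" for p
      proof -
        obtain x idx where p: "p = (x, idx)" by (cases p)
        have "\<tau> (x, idx) = \<tau> (x, idx(j0 := x))" using spV \<tau>(1) unfolding V_def by blast
        also have "\<dots> = \<Theta> \<tau> (idx(j0 := x))" by (simp add: \<Theta>_def)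
        also have "\<dots> = 0" using \<tau>(2) by simp
        finally show ?thesis using p by simp
      qed
      then show "\<tau> = 0" by (simp add: fun_eq_iff)
    qed
    then show ?thesis using module_hom.inj_on_iff_eq_0[OF m\<Theta>, of "fvs.span (T ` K)"] by simp
  qed
  have nzF: "\<forall>k\<in>K. \<forall>j\<in>J'. F k j \<noteq> 0" using insert.prems(1) by blast
  have uw: "\<forall>k\<in>K. u k \<noteq> 0 \<and> w k \<noteq> 0"
    using insert.prems(1) insert.hyps(1) pt_nz unfolding u_def w_def by blast
  have connT: "conn T K"
    unfolding conn_def
  proof (intro allI impI)
    fix A assume A: "A \<subseteq> K" "A \<noteq> {}" "A \<noteq> K"
    show "fvs.span (T ` A) \<inter> fvs.span (T ` (K - A)) \<noteq> {0}"
    proof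
      assume e: "fvs.span (T ` A) \<inter> fvs.span (T ` (K - A)) = {0}"
      have "fvs.span ((\<lambda>k. pt (insert j0 J') (F k)) ` A) \<inter> fvs.span ((\<lambda>k. pt (insert j0 J') (F k)) ` (K - A)) \<noteq> {0}"
        using insert.prems(2) A unfolding conn_def by simp
      moreover have "0 \<in> fvs.span ((\<lambda>k. pt (insert j0 J') (F k)) ` A) \<inter> fvs.span ((\<lambda>k. pt (insert j0 J') (F k)) ` (K - A))"
        using fvs.span_zero by blast
      ultimately obtain v where v: "v \<in> fvs.span ((\<lambda>k. pt (insert j0 J') (F k)) ` A)"
          "v \<in> fvs.span ((\<lambda>k. pt (insert j0 J') (F k)) ` (K - A))" "v \<noteq> 0"
        by blast
      have s1: "fvs.span ((\<lambda>k. pt (insert j0 J') (F k)) ` B) = \<Theta> ` fvs.span (T ` B)" for B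
        unfolding ptK using module_hom.span_image[OF m\<Theta>] by simp
      obtain a where a: "a \<in> fvs.span (T ` A)" "v = \<Theta> a" using v(1) s1 by blast
      obtain b where b: "b \<in> fvs.span (T ` (K - A))" "v = \<Theta> b" using v(2) s1 by blast
      have aK: "a \<in> fvs.span (T ` K)" using a(1) fvs.span_mono[of "T ` A" "T ` K"] A(1) by blast
      have bK: "b \<in> fvs.span (T ` K)" using b(1) fvs.span_mono[of "T ` (K - A)" "T ` K"] by blast
      have "a = b" using inj_onD[OF inj _ aK bK] a(2) b(2) by simp
      then have "a = 0" using e a(1) b(1) by blast
      then show False using a(2) v(3) module_hom.zero[OF m\<Theta>] by simp
    qed
  qed
  have fK: "finite (T ` K)" using assms(2) by simp
  have dimT: "fvs.dim ((\<lambda>k. pt (insert j0 J') (F k)) ` K) = fvs.dim (T ` K)"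
    unfolding ptK by (rule dim_inj_image[OF m\<Theta> fK inj])
  have st2: "fvs.dim (u ` K) + fvs.dim (w ` K) \<le> fvs.dim (T ` K) + 1"
    using ST2[OF assms(2,3) uw] connT unfolding T_def by blast
  have connw: "conn w K"
    unfolding conn_def
  proof (intro allI impI)
    fix A assume A: "A \<subseteq> K" "A \<noteq> {}" "A \<noteq> K"
    show "fvs.span (w ` A) \<inter> fvs.span (w ` (K - A)) \<noteq> {0}"
    proof
      assume e: "fvs.span (w ` A) \<inter> fvs.span (w ` (K - A)) = {0}"
      have "fvs.span (T ` A) \<inter> fvs.span (T ` (K - A)) \<subseteq> {0}"
      proof
        fix \<tau> assume \<tau>: "\<tau> \<in> fvs.span (T ` A) \<inter> fvs.span (T ` (K - A))"
        have "\<tau> (x, idx) = 0" for x idx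
        proof -
          have "(\<lambda>idx. \<tau> (x, idx)) \<in> fvs.span (w ` A)"
            using \<tau> row_in_span[of \<tau> u w A x] unfolding T_def by blast
          moreover have "(\<lambda>idx. \<tau> (x, idx)) \<in> fvs.span (w ` (K - A))"
            using \<tau> row_in_span[of \<tau> u w "K - A" x] unfolding T_def by blast
          ultimately have "(\<lambda>idx. \<tau> (x, idx)) = 0" using e by blast
          then show ?thesis by (metis zero_fun_def)
        qed
        then have "\<tau> = 0" by (simp add: fun_eq_iff)
        then show "\<tau> \<in> {0}" by simp
      qed
      moreover have "fvs.span (T ` A) \<inter> fvs.span (T ` (K - A)) \<noteq> {0}"
        using connT A unfolding conn_def by simp
      moreover have "0 \<in> fvs.span (T ` A) \<inter> fvs.span (T ` (K - A))" using fvs.span_zero by blast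
      ultimately show False by blast
    qed
  qed
  have IH: "(\<Sum>j\<in>J'. fvs.dim ((\<lambda>k. F k j) ` K)) + 1 \<le> fvs.dim (w ` K) + card J'"
    using insert.IH[OF nzF] connw unfolding w_def by blast
  have "(\<Sum>j\<in>insert j0 J'. fvs.dim ((\<lambda>k. F k j) ` K)) = fvs.dim (u ` K) + (\<Sum>j\<in>J'. fvs.dim ((\<lambda>k. F k j) ` K))"
    using insert.hyps unfolding u_def by simp
  moreover have "card (insert j0 J') = card J' + 1" using insert.hyps by simp
  ultimately show ?case using IH st2 dimT by linarith
qed

lemma KL:
  fixes F :: "'k \<Rightarrow> nat \<Rightarrow> 'i \<Rightarrow> 'a::field" and c :: "'k \<Rightarrow> 'a"
  assumes J: "finite J" and K: "finite K" "K \<noteq> {}"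
    and nz: "\<forall>k\<in>K. \<forall>j\<in>J. F k j \<noteq> 0" and cnz: "\<forall>k\<in>K. c k \<noteq> 0"
    and van: "(\<Sum>k\<in>K. fscale (c k) (pt J (F k))) = 0"
    and mini: "\<forall>A. A \<subseteq> K \<longrightarrow> A \<noteq> {} \<longrightarrow> A \<noteq> K \<longrightarrow> (\<Sum>k\<in>A. fscale (c k) (pt J (F k))) \<noteq> 0"
  shows "(\<Sum>j\<in>J. fvs.dim ((\<lambda>k. F k j) ` K)) + 2 \<le> card K + card J"
proof -
  define p where "p = (\<lambda>k. pt J (F k))"
  have split: "(\<Sum>k\<in>A. fscale (c k) (p k)) = - (\<Sum>k\<in>K - A. fscale (c k) (p k))" if "A \<subseteq> K" for A
  proof -
    have "(\<Sum>k\<in>K. fscale (c k) (p k)) = (\<Sum>k\<in>A. fscale (c k) (p k)) + (\<Sum>k\<in>K - A. fscale (c k) (p k))"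
      using sum.subset_diff[OF that K(1)] by (simp add: add.commute)
    then show ?thesis using van unfolding p_def by (simp add: eq_neg_iff_add_eq_0)
  qed
  have cn: "conn p K"
    unfolding conn_def
  proof (intro allI impI)
    fix A assume A: "A \<subseteq> K" "A \<noteq> {}" "A \<noteq> K"
    define s where "s = (\<Sum>k\<in>A. fscale (c k) (p k))"
    have s0: "s \<noteq> 0" using mini A unfolding s_def p_def by blast
    have s1: "s \<in> fvs.span (p ` A)" unfolding s_def
      by (intro fvs.span_sum fvs.span_scale fvs.span_base) auto
    have "- (\<Sum>k\<in>K - A. fscale (c k) (p k)) \<in> fvs.span (p ` (K - A))"
      by (intro fvs.span_neg fvs.span_sum fvs.span_scale fvs.span_base) auto
    then have s2: "s \<in> fvs.span (p ` (K - A))" using split[OF A(1)] unfolding s_def by simp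
    show "fvs.span (p ` A) \<inter> fvs.span (p ` (K - A)) \<noteq> {0}" using s0 s1 s2 by blast
  qed
  have st: "(\<Sum>j\<in>J. fvs.dim ((\<lambda>k. F k j) ` K)) + 1 \<le> fvs.dim (p ` K) + card J"
    using STJ[OF J K nz] cn unfolding p_def by blast
  obtain k0 where k0: "k0 \<in> K" using K(2) by blast
  have "fscale (c k0) (p k0) = - (\<Sum>k\<in>K - {k0}. fscale (c k) (p k))"
    using split[of "{k0}"] k0 by simp
  moreover have "- (\<Sum>k\<in>K - {k0}. fscale (c k) (p k)) \<in> fvs.span (p ` (K - {k0}))"
    by (intro fvs.span_neg fvs.span_sum fvs.span_scale fvs.span_base) auto
  ultimately have "p k0 \<in> fvs.span (p ` (K - {k0}))"
    using scale_in_span_imp cnz k0 by metis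
  then have "fvs.dim (insert (p k0) (p ` (K - {k0}))) = fvs.dim (p ` (K - {k0}))"
    by (rule dim_insert_in)
  moreover have "insert (p k0) (p ` (K - {k0})) = p ` K" using k0 by blast
  ultimately have "fvs.dim (p ` K) = fvs.dim (p ` (K - {k0}))" by simp
  also have "\<dots> \<le> card (p ` (K - {k0}))" using K(1) by (intro fvs.dim_le_card') simp
  also have "\<dots> \<le> card (K - {k0})" using K(1) by (intro card_image_le) simp
  also have "\<dots> = card K - 1" using k0 K(1) by simp
  finally have "fvs.dim (p ` K) \<le> card K - 1" .
  moreover have "card K \<ge> 1" using K k0 by (simp add: Suc_leI card_gt_0_iff)
  ultimately show ?thesis using st by linarith
qed

lemma counting:
  fixes BB :: "'b set" and qf rf :: "'b \<Rightarrow> nat" and n r q s l :: nat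
  assumes fin: "finite BB"
    and sq: "(\<Sum>B\<in>BB. qf B) = n" and sr: "(\<Sum>B\<in>BB. rf B) = r"
    and le: "\<forall>B\<in>BB. qf B \<le> rf B"
    and big: "\<forall>B\<in>BB. s + 1 \<le> qf B \<longrightarrow>
       int (rf B) - int (qf B) \<ge> 1 + max 0 (int r - int n - \<lceil>real (n - q + s) / real (qf B)\<rceil> + 1)"
    and s1: "1 \<le> s" and sl: "s * l \<le> q" and qn: "q < n"
    and rn: "int r - int n \<le> \<lceil>real (n - q) / real s\<rceil>"
  shows "l \<le> card {B\<in>BB. 1 \<le> qf B \<and> qf B \<le> s \<and> rf B \<le> qf B}"
proof (rule ccontr)
  define good where "good = (\<lambda>B. 1 \<le> qf B \<and> qf B \<le> s \<and> rf B \<le> qf B)"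
  define G where "G = {B\<in>BB. good B}"
  define Bad where "Bad = {B\<in>BB. 1 \<le> qf B \<and> \<not> good B}"
  define D where "D = int r - int n"
  define M where "M = n - q + s"
  define e where "e = (\<lambda>B. int (rf B) - int (qf B))"
  assume "\<not> l \<le> card {B\<in>BB. 1 \<le> qf B \<and> qf B \<le> s \<and> rf B \<le> qf B}"
  then have cG: "card G + 1 \<le> l" unfolding G_def good_def by simp
  have fG: "finite G" "finite Bad" using fin unfolding G_def Bad_def by auto
  have sG: "(\<Sum>B\<in>G. qf B) \<le> card G * s"
    using sum_bounded_above[of G qf s] unfolding G_def good_def by auto
  have "card G * s + s \<le> q" using cG sl s1
    by (metis add_mult_distrib mult.commute mult_le_mono1 mult_1 order_trans)
  then have sG2: "(\<Sum>B\<in>G. qf B) + s \<le> q" using sG by linarith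
  have "(\<Sum>B\<in>BB. qf B) = (\<Sum>B\<in>G \<union> Bad. qf B)"
    using fin unfolding G_def Bad_def by (intro sum.mono_neutral_right) auto
  also have "\<dots> = (\<Sum>B\<in>G. qf B) + (\<Sum>B\<in>Bad. qf B)"
    using fG unfolding G_def Bad_def by (intro sum.union_disjoint) auto
  finally have sBad: "M \<le> (\<Sum>B\<in>Bad. qf B)" using sq sG2 qn unfolding M_def by linarith
  have Mpos: "M \<ge> 1" using s1 qn unfolding M_def by linarith
  have eBB: "(\<Sum>B\<in>BB. e B) = D"
    using sq sr unfolding e_def D_def by (simp add: sum_subtractf of_nat_sum[symmetric])
  have e0: "\<forall>B\<in>BB. e B \<ge> 0" using le unfolding e_def by auto
  have eBad: "(\<Sum>B\<in>Bad. e B) \<le> D"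
  proof -
    have "(\<Sum>B\<in>Bad. e B) \<le> (\<Sum>B\<in>BB. e B)"
      using fin e0 unfolding Bad_def by (intro sum_mono2) auto
    then show ?thesis using eBB by simp
  qed
  have e1: "\<forall>B\<in>Bad. e B \<ge> 1"
  proof
    fix B assume B: "B \<in> Bad"
    show "e B \<ge> 1"
    proof (cases "qf B \<le> s")
      case True
      then have "rf B > qf B" using B unfolding Bad_def good_def by auto
      then show ?thesis unfolding e_def by simp
    next
      case False
      then show ?thesis using big B unfolding Bad_def e_def by auto
    qed
  qed
  have Bne: "Bad \<noteq> {}" using sBad Mpos by auto
  define t where "t = Max (qf ` Bad)"
  have "t \<in> qf ` Bad" unfolding t_def using Max_in[of "qf ` Bad"] fG Bne by simp
  then obtain Bs where Bs: "Bs \<in> Bad" "qf Bs = t" by blast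
  have tmax: "\<forall>B\<in>Bad. qf B \<le> t" unfolding t_def using fG by auto
  have "(\<Sum>B\<in>Bad. qf B) \<le> card Bad * t" using sum_bounded_above[of Bad qf t] tmax by auto
  then have Mt: "M \<le> card Bad * t" using sBad by linarith
  have sume: "(\<Sum>B\<in>Bad. e B) \<ge> int (card Bad)"
    using sum_mono[of Bad "\<lambda>_. 1" e] e1 by simp
  show False
  proof (cases "s + 1 \<le> t")
    case True
    have tpos: "t > 0" using True by simp
    have eBs: "e Bs \<ge> D + 2 - \<lceil>real M / real t\<rceil>"
      using big Bs True unfolding Bad_def e_def D_def M_def by fastforce
    have "real M / real t \<le> real (card Bad)"
      using Mt tpos by (simp add: field_simps of_nat_mult[symmetric] del: of_nat_mult)
    then have cc: "\<lceil>real M / real t\<rceil> \<le> int (card Bad)" by (simp add: ceiling_le_iff)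
    have "(\<Sum>B\<in>Bad. e B) = e Bs + (\<Sum>B\<in>Bad - {Bs}. e B)"
      using sum.remove[OF fG(2) Bs(1)] by simp
    moreover have "(\<Sum>B\<in>Bad - {Bs}. e B) \<ge> int (card (Bad - {Bs}))"
      using sum_mono[of "Bad - {Bs}" "\<lambda>_. 1" e] e1 by simp
    moreover have "card (Bad - {Bs}) = card Bad - 1" using Bs(1) fG(2) by simp
    moreover have "card Bad \<ge> 1" using Bne fG(2) by (simp add: Suc_leI card_gt_0_iff)
    ultimately have "(\<Sum>B\<in>Bad. e B) \<ge> D + 1" using eBs cc by linarith
    then show False using eBad by linarith
  next
    case False
    then have "t \<le> s" by simp
    then have "M \<le> card Bad * s" using Mt by (meson le_trans mult_le_mono2)
    then have "real M / real s \<le> real (card Bad)"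
      using s1 by (simp add: field_simps of_nat_mult[symmetric] del: of_nat_mult)
    then have cc: "\<lceil>real M / real s\<rceil> \<le> int (card Bad)" by (simp add: ceiling_le_iff)
    have "real M / real s = real (n - q) / real s + 1"
      using s1 qn unfolding M_def by (simp add: field_simps)
    then have "\<lceil>real M / real s\<rceil> = \<lceil>real (n - q) / real s\<rceil> + 1" by simp
    then have "D + 1 \<le> int (card Bad)" using cc rn unfolding D_def by linarith
    then show False using sume eBad by linarith
  qed
qed


lemma min_part:
  fixes f :: "'k \<Rightarrow> 'v::ab_group_add"
  shows "finite K \<Longrightarrow> (\<Sum>k\<in>K. f k) = 0 \<Longrightarrow>
    \<exists>BB. is_part K BB \<and> (\<forall>B\<in>BB. (\<Sum>k\<in>B. f k) = 0 \<and>
       (\<forall>A. A \<subseteq> B \<longrightarrow> A \<noteq> {} \<longrightarrow> A \<noteq> B \<longrightarrow> (\<Sum>k\<in>A. f k) \<noteq> 0))"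
proof (induction "card K" arbitrary: K rule: less_induct)
  case less
  show ?case
  proof (cases "K = {}")
    case True
    then show ?thesis by (intro exI[of _ "{}"]) (simp add: is_part_def)
  next
    case Kne: False
    show ?thesis
    proof (cases "\<forall>A. A \<subseteq> K \<longrightarrow> A \<noteq> {} \<longrightarrow> A \<noteq> K \<longrightarrow> (\<Sum>k\<in>A. f k) \<noteq> 0")
      case True
      have "is_part K {K}" using Kne by (simp add: is_part_def)
      then show ?thesis using True less.prems(2) by (intro exI[of _ "{K}"]) simp
    next
      case False
      then obtain A where A: "A \<subseteq> K" "A \<noteq> {}" "A \<noteq> K" "(\<Sum>k\<in>A. f k) = 0" by blast
      have fA: "finite A" using A(1) less.prems(1) by (rule finite_subset)
      have fB: "finite (K - A)" using less.prems(1) by simp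
      have sB: "(\<Sum>k\<in>K - A. f k) = 0"
        using sum.subset_diff[OF A(1) less.prems(1), of f] less.prems(2) A(4) by simp
      have cA: "card A < card K" using A less.prems(1) by (meson psubsetI psubset_card_mono)
      have cB: "card (K - A) < card K" using A less.prems(1)
        by (metis Diff_empty Diff_subset card_Diff_subset card_gt_0_iff diff_less fA subset_empty Diff_Diff_Int Int_absorb2)
      obtain BA where BA: "is_part A BA" "\<forall>B\<in>BA. (\<Sum>k\<in>B. f k) = 0 \<and>
       (\<forall>C. C \<subseteq> B \<longrightarrow> C \<noteq> {} \<longrightarrow> C \<noteq> B \<longrightarrow> (\<Sum>k\<in>C. f k) \<noteq> 0)"
        using less.hyps[OF cA fA A(4)] by blast
      obtain BB' where BB': "is_part (K - A) BB'" "\<forall>B\<in>BB'. (\<Sum>k\<in>B. f k) = 0 \<and>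
       (\<forall>C. C \<subseteq> B \<longrightarrow> C \<noteq> {} \<longrightarrow> C \<noteq> B \<longrightarrow> (\<Sum>k\<in>C. f k) \<noteq> 0)"
        using less.hyps[OF cB fB sB] by blast
      have "is_part K (BA \<union> BB')"
      proof -
        have u1: "\<Union>BA = A" "\<Union>BB' = K - A" using BA(1) BB'(1) unfolding is_part_def by auto
        have d1: "\<forall>P\<in>BA. \<forall>Q\<in>BA. P \<noteq> Q \<longrightarrow> P \<inter> Q = {}" "\<forall>P\<in>BB'. \<forall>Q\<in>BB'. P \<noteq> Q \<longrightarrow> P \<inter> Q = {}"
          using BA(1) BB'(1) unfolding is_part_def by auto
        have d2: "P \<inter> Q = {}" if "P \<in> BA" "Q \<in> BB'" for P Q
        proof -
          have "P \<subseteq> A" "Q \<subseteq> K - A" using that u1 by auto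
          then show ?thesis by blast
        qed
        have "\<Union>(BA \<union> BB') = K" using u1 A(1) by auto
        moreover have "\<forall>P\<in>BA \<union> BB'. P \<noteq> {}" using BA(1) BB'(1) unfolding is_part_def by auto
        moreover have "\<forall>P\<in>BA \<union> BB'. \<forall>Q\<in>BA \<union> BB'. P \<noteq> Q \<longrightarrow> P \<inter> Q = {}"
          using d1 d2 by (metis Int_commute Un_iff)
        ultimately show ?thesis unfolding is_part_def by blast
      qed
      moreover have "\<forall>B\<in>BA \<union> BB'. (\<Sum>k\<in>B. f k) = 0 \<and>
       (\<forall>C. C \<subseteq> B \<longrightarrow> C \<noteq> {} \<longrightarrow> C \<noteq> B \<longrightarrow> (\<Sum>k\<in>C. f k) \<noteq> 0)"
        using BA(2) BB'(2) by (metis Un_iff)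
      ultimately show ?thesis by (intro exI[of _ "BA \<union> BB'"] conjI)
    qed
  qed
qed

theorem theorem7p9:
  fixes x y :: "nat \<Rightarrow> nat \<Rightarrow> 'i \<Rightarrow> 'a::field"
    and n m q s r l :: nat
  assumes "n \<ge> 2" and "m \<ge> 2"
    and "1 \<le> q" and "q \<le> n - 1"
    and "1 \<le> s" and "s \<le> q"
    and "n + 1 \<le> r"
    and "real r \<le> real n + of_int \<lceil>real (n - q) / real s\<rceil>"
    and "l = nat \<lfloor>real q / real s\<rfloor>"
    and "\<forall>a\<in>{1..n}. is_product_tensor m (x a)"
    and "\<And>S. S \<subseteq> {1..n} \<Longrightarrow> s + 1 \<le> card S \<Longrightarrow> card S \<le> n \<Longrightarrow>
          2 * int (card S)
          + max 0 (int r - int n - \<lceil>real (n - q + s) / real (card S)\<rceil> + 1)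
          \<le> (\<Sum>j\<in>{1..m}. int (vdim {x a j | a. a \<in> S}) - 1) + 1"
    and "\<forall>a\<in>{1..r}. is_product_tensor m (y a)"
    and "tsum m x {1..n} = tsum m y {1..r}"
    and "irreducible_pair m n r x y"
  shows "has_subpartition m n r x y s l"
proof -
  note hyp = assms(11)
  define Z :: "nat + nat \<Rightarrow> nat \<Rightarrow> 'i \<Rightarrow> 'a" where "Z = case_sum x y"
  define c :: "nat + nat \<Rightarrow> 'a" where "c = case_sum (\<lambda>_. 1) (\<lambda>_. -1)"
  define f where "f = (\<lambda>k. fscale (c k) (pt {1..m} (Z k)))"
  define K0 :: "(nat + nat) set" where "K0 = Inl ` {1..n} \<union> Inr ` {1..r}"
  define Qof :: "(nat + nat) set \<Rightarrow> nat set" where "Qof = (\<lambda>B. Inl -` B)"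
  define Rof :: "(nat + nat) set \<Rightarrow> nat set" where "Rof = (\<lambda>B. Inr -` B)"
  have tsum_pt: "tsum m z A = (\<Sum>a\<in>A. pt {1..m} (z a))" for z :: "nat \<Rightarrow> nat \<Rightarrow> 'i \<Rightarrow> 'a" and A
    by (simp add: tsum_def ptensor_def pt_def fun_eq_iff)
  have Bdec: "B = Inl ` Qof B \<union> Inr ` Rof B" for B
  proof
    show "B \<subseteq> Inl ` Qof B \<union> Inr ` Rof B"
    proof
      fix k assume "k \<in> B"
      then show "k \<in> Inl ` Qof B \<union> Inr ` Rof B" by (cases k) (auto simp: Qof_def Rof_def)
    qed
    show "Inl ` Qof B \<union> Inr ` Rof B \<subseteq> B" by (auto simp: Qof_def Rof_def)
  qed
  have finQR: "finite (Qof B)" "finite (Rof B)" if "finite B" for B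
    using that unfolding Qof_def Rof_def by (auto intro: finite_vimageI)
  have cardB: "card B = card (Qof B) + card (Rof B)" if "finite B" for B
  proof -
    have "card B = card (Inl ` Qof B \<union> Inr ` Rof B)" using Bdec[of B] by simp
    also have "\<dots> = card (Inl ` Qof B :: (nat + nat) set) + card (Inr ` Rof B :: (nat + nat) set)"
      by (rule card_Un_disjoint[OF finite_imageI[OF finQR(1)[OF that]] finite_imageI[OF finQR(2)[OF that]]]) auto
    also have "\<dots> = card (Qof B) + card (Rof B)" by (simp add: card_image)
    finally show ?thesis .
  qed
  have splitB: "(\<Sum>k\<in>B. f k) = tsum m x (Qof B) - tsum m y (Rof B)" if fB: "finite B" for B
  proof -
    have "(\<Sum>k\<in>B. f k) = (\<Sum>k\<in>Inl ` Qof B \<union> Inr ` Rof B. f k)" using Bdec[of B] by simp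
    also have "\<dots> = (\<Sum>k\<in>Inl ` Qof B. f k) + (\<Sum>k\<in>Inr ` Rof B. f k)"
      by (rule sum.union_disjoint[OF finite_imageI[OF finQR(1)[OF fB]] finite_imageI[OF finQR(2)[OF fB]]]) auto
    also have "(\<Sum>k\<in>Inl ` Qof B. f k) = (\<Sum>a\<in>Qof B. pt {1..m} (x a))"
      by (simp add: sum.reindex f_def c_def Z_def fscale_def)
    also have "(\<Sum>k\<in>Inr ` Rof B. f k) = - (\<Sum>b\<in>Rof B. pt {1..m} (y b))"
      by (simp add: sum.reindex f_def c_def Z_def fscale_def sum_negf[symmetric] fun_eq_iff)
    finally show ?thesis unfolding tsum_pt diff_conv_add_uminus .
  qed
  have fK0: "finite K0" unfolding K0_def by simp
  have QK0: "Qof K0 = {1..n}" and RK0: "Rof K0 = {1..r}" unfolding K0_def Qof_def Rof_def by auto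
  have van0: "(\<Sum>k\<in>K0. f k) = 0" using splitB[OF fK0] QK0 RK0 assms(13) by simp
  obtain BB where BB: "is_part K0 BB" "\<forall>B\<in>BB. (\<Sum>k\<in>B. f k) = 0 \<and>
       (\<forall>A. A \<subseteq> B \<longrightarrow> A \<noteq> {} \<longrightarrow> A \<noteq> B \<longrightarrow> (\<Sum>k\<in>A. f k) \<noteq> 0)"
    using min_part[OF fK0 van0] by blast
  have fBB: "finite BB" using is_part_finite[OF fK0 BB(1)] .
  have UBB: "\<Union>BB = K0" and disj: "\<forall>P\<in>BB. \<forall>Q\<in>BB. P \<noteq> Q \<longrightarrow> P \<inter> Q = {}"
    and nemp: "\<forall>P\<in>BB. P \<noteq> {}"
    using BB(1) unfolding is_part_def by auto
  have BK0: "B \<subseteq> K0" if "B \<in> BB" for B using UBB that by blast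
  have fB: "finite B" if "B \<in> BB" for B using BK0[OF that] fK0 by (rule finite_subset)
  have Qsub: "Qof B \<subseteq> {1..n}" if "B \<in> BB" for B
  proof -
    have "Qof B \<subseteq> Qof K0" using BK0[OF that] unfolding Qof_def by auto
    then show ?thesis using QK0 by simp
  qed
  have Rsub: "Rof B \<subseteq> {1..r}" if "B \<in> BB" for B
  proof -
    have "Rof B \<subseteq> Rof K0" using BK0[OF that] unfolding Rof_def by auto
    then show ?thesis using RK0 by simp
  qed
  have teq: "tsum m x (Qof B) = tsum m y (Rof B)" if "B \<in> BB" for B
    using splitB[OF fB[OF that]] BB(2) that by simp
  have irr: "card (Qof B) \<le> card (Rof B)" if "B \<in> BB" for B
    using assms(14) teq[OF that] Qsub[OF that] Rsub[OF that]
    unfolding irreducible_pair_def reducible_def by (meson not_le)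
  have disjQ: "Qof B \<inter> Qof B' = {}" "Rof B \<inter> Rof B' = {}" if "B \<in> BB" "B' \<in> BB" "B \<noteq> B'" for B B'
    using disj that unfolding Qof_def Rof_def by auto
  have sq: "(\<Sum>B\<in>BB. card (Qof B)) = n"
  proof -
    have "(\<Sum>B\<in>BB. card (Qof B)) = card (\<Union>B\<in>BB. Qof B)"
      using fBB finQR fB disjQ by (intro card_UN_disjoint[symmetric]) auto
    also have "(\<Union>B\<in>BB. Qof B) = Qof K0" using UBB unfolding Qof_def by auto
    finally show ?thesis using QK0 by simp
  qed
  have sr: "(\<Sum>B\<in>BB. card (Rof B)) = r"
  proof -
    have "(\<Sum>B\<in>BB. card (Rof B)) = card (\<Union>B\<in>BB. Rof B)"
      using fBB finQR fB disjQ by (intro card_UN_disjoint[symmetric]) auto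
    also have "(\<Union>B\<in>BB. Rof B) = Rof K0" using UBB unfolding Rof_def by auto
    finally show ?thesis using RK0 by simp
  qed
  have big: "\<forall>B\<in>BB. s + 1 \<le> card (Qof B) \<longrightarrow>
       int (card (Rof B)) - int (card (Qof B)) \<ge> 1 + max 0 (int r - int n - \<lceil>real (n - q + s) / real (card (Qof B))\<rceil> + 1)"
  proof (intro ballI impI)
    fix B assume B: "B \<in> BB" and sB: "s + 1 \<le> card (Qof B)"
    have nzZ: "\<forall>k\<in>B. \<forall>j\<in>{1..m}. Z k j \<noteq> 0"
    proof (intro ballI)
      fix k j assume k: "k \<in> B" and j: "j \<in> {1..m}"
      show "Z k j \<noteq> 0"
      proof (cases k)
        case (Inl a)
        then have "a \<in> {1..n}" using Qsub[OF B] k unfolding Qof_def by auto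
        then show ?thesis using assms(10) j Inl unfolding is_product_tensor_def Z_def by auto
      next
        case (Inr b)
        then have "b \<in> {1..r}" using Rsub[OF B] k unfolding Rof_def by auto
        then show ?thesis using assms(12) j Inr unfolding is_product_tensor_def Z_def by auto
      qed
    qed
    have cnz: "\<forall>k\<in>B. c k \<noteq> 0" unfolding c_def by (auto split: sum.split)
    have kl: "(\<Sum>j\<in>{1..m}. fvs.dim ((\<lambda>k. Z k j) ` B)) + 2 \<le> card B + card {1..m}"
      using KL[OF _ fB[OF B] nemp[rule_format, OF B] nzZ cnz] BB(2) B unfolding f_def by auto
    have dimle: "vdim {x a j | a. a \<in> Qof B} \<le> fvs.dim ((\<lambda>k. Z k j) ` B)" for j
    proof -
      have "{x a j | a. a \<in> Qof B} \<subseteq> (\<lambda>k. Z k j) ` B" unfolding Qof_def Z_def by force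
      then show ?thesis unfolding vdim_def using fB[OF B] by (intro dim_subset_fin) auto
    qed
    have cS: "card (Qof B) \<le> n" using card_mono[OF _ Qsub[OF B]] by simp
    have h: "2 * int (card (Qof B)) + max 0 (int r - int n - \<lceil>real (n - q + s) / real (card (Qof B))\<rceil> + 1)
          \<le> (\<Sum>j\<in>{1..m}. int (vdim {x a j | a. a \<in> Qof B}) - 1) + 1"
      by (rule hyp[OF Qsub[OF B] sB cS])
    have "(\<Sum>j\<in>{1..m}. int (vdim {x a j | a. a \<in> Qof B}) - 1)
        = (\<Sum>j\<in>{1..m}. int (vdim {x a j | a. a \<in> Qof B})) - int m"
      by (simp add: sum_subtractf)
    also have "\<dots> \<le> (\<Sum>j\<in>{1..m}. int (fvs.dim ((\<lambda>k. Z k j) ` B))) - int m"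
      using dimle by (simp add: sum_mono)
    finally have A: "(\<Sum>j\<in>{1..m}. int (vdim {x a j | a. a \<in> Qof B}) - 1)
       \<le> (\<Sum>j\<in>{1..m}. int (fvs.dim ((\<lambda>k. Z k j) ` B))) - int m" .
    have eqs: "int (\<Sum>j\<in>{1..m}. fvs.dim ((\<lambda>k. Z k j) ` B)) = (\<Sum>j\<in>{1..m}. int (fvs.dim ((\<lambda>k. Z k j) ` B)))"
      by (rule of_nat_sum)
    have "(\<Sum>j\<in>{1..m}. int (vdim {x a j | a. a \<in> Qof B}) - 1) \<le> int (card B) - 2"
      using A eqs kl card_atLeastAtMost[of 1 m] by linarith
    then show "int (card (Rof B)) - int (card (Qof B)) \<ge> 1 + max 0 (int r - int n - \<lceil>real (n - q + s) / real (card (Qof B))\<rceil> + 1)"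
      using h cardB[OF fB[OF B]] by linarith
  qed
  have sl: "s * l \<le> q"
  proof -
    have "real l \<le> real q / real s" using assms(9) by simp
    then have "real s * real l \<le> real q" using assms(5) by (simp add: field_simps)
    then show ?thesis by (simp add: of_nat_mult[symmetric] del: of_nat_mult)
  qed
  have qn: "q < n" using assms(1,4) by linarith
  have rn: "int r - int n \<le> \<lceil>real (n - q) / real s\<rceil>" using assms(8) by linarith
  have cnt: "l \<le> card {B\<in>BB. 1 \<le> card (Qof B) \<and> card (Qof B) \<le> s \<and> card (Rof B) \<le> card (Qof B)}"
    by (rule counting[OF fBB sq sr _ big assms(5) sl qn rn]) (use irr in blast)
  obtain G' where G': "G' \<subseteq> {B\<in>BB. 1 \<le> card (Qof B) \<and> card (Qof B) \<le> s \<and> card (Rof B) \<le> card (Qof B)}"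
    "card G' = l" "finite G'"
    by (rule obtain_subset_with_card_n[OF cnt])
  obtain h where h: "bij_betw h {1..l} G'" using ex_bij_betw_nat_finite_1[OF G'(3)] G'(2) by auto
  have hG: "h p \<in> BB" "1 \<le> card (Qof (h p))" "card (Qof (h p)) \<le> s" "card (Rof (h p)) \<le> card (Qof (h p))"
    if "p \<in> {1..l}" for p
    using bij_betwE[OF h] that G'(1) by auto
  have c1: "\<forall>p\<in>{1..l}. Qof (h p) \<subseteq> {1..n} \<and> Rof (h p) \<subseteq> {1..r}"
    using Qsub Rsub hG(1) by blast
  have c2: "\<forall>p\<in>{1..l}. \<forall>p'\<in>{1..l}. p \<noteq> p' \<longrightarrow>
      Qof (h p) \<inter> Qof (h p') = {} \<and> Rof (h p) \<inter> Rof (h p') = {}"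
  proof (intro ballI impI)
    fix p p' assume p: "p \<in> {1..l}" and p': "p' \<in> {1..l}" and ne: "p \<noteq> p'"
    have "h p \<noteq> h p'" using bij_betw_imp_inj_on[OF h] p p' ne by (meson inj_on_eq_iff)
    then show "Qof (h p) \<inter> Qof (h p') = {} \<and> Rof (h p) \<inter> Rof (h p') = {}"
      using disjQ hG(1)[OF p] hG(1)[OF p'] by auto
  qed
  have c3: "\<forall>p\<in>{1..l}. max 1 (card (Rof (h p))) \<le> card (Qof (h p)) \<and> card (Qof (h p)) \<le> s \<and>
      tsum m x (Qof (h p)) = tsum m y (Rof (h p))"
  proof
    fix p assume p: "p \<in> {1..l}"
    show "max 1 (card (Rof (h p))) \<le> card (Qof (h p)) \<and> card (Qof (h p)) \<le> s \<and>
      tsum m x (Qof (h p)) = tsum m y (Rof (h p))"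
      using hG[OF p] teq[OF hG(1)[OF p]] by simp
  qed
  show ?thesis
    unfolding has_subpartition_def
    by (intro exI[of _ "\<lambda>p. Qof (h p)"] exI[of _ "\<lambda>p. Rof (h p)"] conjI c1 c2 c3)
qed

end
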